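(* Let $T_M,c>0$. Then there exists a solution $f\in C^{2,1/2}(\mathbb R_+)$, with $f>0$ in the interior of $\mathbb R_+$, of $$f''(y)-cf'(y)-f^4(y)=-\int_0^\infty E(y-\eta)f^4(\eta)\,d\eta\ \ (y>0),\qquad f(0)=T_M,\qquad f\ge0.$$ Moreover, $f$ is the limit of a monotone increasing bounded sequence $0\le f_1\le f_2\le\dots\le f_n\le f_{n+1}\le\dots\le T_M$ with $f_n\in C^{2,1/2}(\mathbb R_+)$, $\|f_n\|_{2,1/2}$ uniformly bounded and $f_n>0$ in the interior of $\mathbb R_+$, solving the recursive system $$f_{n+1}''-cf_{n+1}'-f_{n+1}^4=-\int_0^\infty E(y-\eta)f_n^4(\eta)\,d\eta\ \ (y>0,\ n\ge0),\qquad f_0=0,\qquad f_{n+1}(0)=T_M,\qquad f_{n+1}\ge0.$$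
   Context: $E(x)=\frac12E_1(x)=\frac12\int_{|x|}^\infty\frac{e^{-t}}{t}dt$. $\mathbb R_+=[0,\infty)$. $C^{k,\beta}(U)$ denotes $k$ times continuously differentiable functions with finite norm $\|f\|_{k,\beta}=\max_{0\le j\le k}\sup_U|\partial^jf|+\sup_{x\ne y}\frac{|\partial^kf(x)-\partial^kf(y)|}{|x-y|^\beta}$. *)

theory Defs
  imports "HOL-Analysis.Analysis"
begin

definition E1 :: "real \<Rightarrow> real" where
  "E1 x = integral {\<bar>x\<bar>..} (\<lambda>t. exp (- t) / t)"

definition E :: "real \<Rightarrow> real" where
  "E x = E1 x / 2"

text \<open>C2h f f1 f2 K: f is twice continuously differentiable on R_+ = [0,oo)
  (one-sided derivatives at 0), with first derivative f1 and second derivative f2,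
  and all parts of the C^{2,1/2}(R_+) norm are bounded by K:
  sup|f|, sup|f'|, sup|f''| <= K and the 1/2-Hoelder seminorm of f'' is <= K.
  Hence ||f||_{2,1/2} <= 2K, and ||f||_{2,1/2} <= K implies C2h f f1 f2 K.\<close>
definition C2h :: "(real \<Rightarrow> real) \<Rightarrow> (real \<Rightarrow> real) \<Rightarrow> (real \<Rightarrow> real) \<Rightarrow> real \<Rightarrow> bool" where
  "C2h f f1 f2 K \<longleftrightarrow>
     (\<forall>x\<ge>0. (f has_real_derivative f1 x) (at x within {0..})) \<and>
     (\<forall>x\<ge>0. (f1 has_real_derivative f2 x) (at x within {0..})) \<and>
     continuous_on {0..} f2 \<and>
     (\<forall>x\<ge>0. \<bar>f x\<bar> \<le> K \<and> \<bar>f1 x\<bar> \<le> K \<and> \<bar>f2 x\<bar> \<le> K) \<and>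
     (\<forall>x\<ge>0. \<forall>y\<ge>0. \<bar>f2 x - f2 y\<bar> \<le> K * sqrt \<bar>x - y\<bar>)"

end

theory Submission
  imports Defs "HOL-Real_Asymp.Real_Asymp"
begin

lemma has_integral_split_inf:
  fixes f :: "real \<Rightarrow> real"
  assumes "a \<le> b" "(f has_integral i) {a..b}" "(f has_integral j) {b..}"
  shows "(f has_integral (i + j)) {a..}"
proof -
  have "{a..b} \<inter> {b..} = {b}" using assms(1) by auto
  then have "negligible ({a..b} \<inter> {b..})" by simp
  moreover have "{a..b} \<union> {b..} = {a..}" using assms(1) by auto
  ultimately show ?thesis using has_integral_Un[OF assms(2,3)] by simp
qed

lemma E1_even: "E1 (- x) = E1 x" by (simp add: E1_def)
lemma E_even: "E (- x) = E x" by (simp add: E_def E1_even)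
lemma E_sym: "E (x - y) = E (y - x)" by (metis E_even minus_diff_eq)

lemma E1_integrand_meas: "S \<subseteq> {0<..} \<Longrightarrow> S \<in> sets lebesgue \<Longrightarrow>
   (\<lambda>t::real. exp (- t) / t) \<in> borel_measurable (lebesgue_on S)"
  by (rule continuous_imp_measurable_on_sets_lebesgue) (auto intro!: continuous_intros)

lemma E1_hasint: assumes "x > 0"
  shows "((\<lambda>t. exp (- t) / t) has_integral E1 x) {x..}"
proof -
  have "(\<lambda>t. exp (- t) / t) integrable_on {x..}"
  proof (rule measurable_bounded_by_integrable_imp_integrable)
    show "(\<lambda>t. exp (- t) / t) \<in> borel_measurable (lebesgue_on {x..})"
      using assms by (intro E1_integrand_meas) auto
    show "(\<lambda>t. exp (- 1 * t) / x) integrable_on {x..}"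
      using has_integral_divide[OF has_integral_exp_minus_to_infinity[of 1 x], of x]
      unfolding integrable_on_def by auto
    show "norm (exp (- t) / t) \<le> exp (- 1 * t) / x" if "t \<in> {x..}" for t
      using that assms by (auto simp: divide_simps intro!: mult_left_mono)
  qed auto
  then show ?thesis using assms by (simp add: E1_def integrable_integral)
qed

lemma E1_nonneg: "E1 x \<ge> 0"
proof (cases "(\<lambda>t. exp (- t) / t) integrable_on {\<bar>x\<bar>..}")
  case True
  then show ?thesis unfolding E1_def by (intro integral_nonneg) auto
next
  case False
  then show ?thesis unfolding E1_def by (simp add: not_integrable_integral)
qed

lemma E_nonneg: "E x \<ge> 0" using E1_nonneg[of x] by (simp add: E_def)

lemma E1_le_exp: assumes "x > 0" shows "x * E1 x \<le> exp (- x)"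
proof -
  have "E1 x \<le> exp (- 1 * x) / 1 / x"
    using has_integral_le[OF E1_hasint[OF assms]
        has_integral_divide[OF has_integral_exp_minus_to_infinity[of 1 x], of x]] assms
    by (auto simp: divide_simps intro!: mult_left_mono)
  then show ?thesis using assms by (simp add: field_simps)
qed

lemma powr32_int: assumes "x > (0::real)"
  shows "((\<lambda>t. t powr (-3/2)) has_integral 2 / sqrt x) {x..}"
proof -
  have e: "(-3/2::real) + 1 = -(1/2)" by simp
  have l: "(-3/2::real) < -1" by simp
  have p: "x powr (-(1/2)) = inverse (sqrt x)"
    using assms by (simp only: powr_minus powr_half_sqrt less_imp_le)
  have q: "-(inverse a) / (-(1/2)) = 2 / (a::real)" for a by (simp add: field_simps)
  have h0: "((\<lambda>t. t powr (-3/2)) has_integral -(x powr (-3/2+1)) / (-3/2+1)) {x..}"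
    by (rule has_integral_powr_to_inf[OF l assms])
  have v: "-(x powr (-3/2+1)) / (-3/2+1) = 2/sqrt x"
    unfolding e p by (rule q)
  show ?thesis using h0 unfolding v .
qed

lemma E1_le_sqrt: assumes "x > 0" shows "E1 x \<le> 2 / sqrt x"
proof -
  have le: "exp (- t) / t \<le> t powr (-3/2)" if "t \<ge> x" for t
  proof -
    have t: "t > 0" using that assms by simp
    have "exp t \<ge> 1 + t" by (rule exp_ge_add_one_self)
    have "sqrt t \<le> sqrt ((1 + t)^2)" using t mult_nonneg_nonneg[of t t]
      by (intro real_sqrt_le_mono) (simp add: power2_eq_square algebra_simps)
    then have "sqrt t \<le> 1 + t" using t by simp
    then have "sqrt t \<le> exp t" using \<open>exp t \<ge> 1 + t\<close> by linarith
    then have st: "exp (- t) * sqrt t \<le> 1"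
      by (simp add: exp_minus field_simps)
    have pw: "t powr (-3/2) = 1 / (t * sqrt t)"
    proof -
      have "t powr (3/2) = t powr (1 + 1/2)" by simp
      also have "\<dots> = t powr 1 * t powr (1/2)" by (rule powr_add)
      also have "\<dots> = t * sqrt t" using t by (simp add: powr_half_sqrt)
      finally have a: "t powr (3/2) = t * sqrt t" .
      have "t powr (-3/2) = t powr (-(3/2))" by simp
      also have "\<dots> = inverse (t powr (3/2))" by (rule powr_minus)
      finally show ?thesis unfolding a by (simp add: field_simps)
    qed
    have "exp (- t) / t = exp (- t) * sqrt t / (t * sqrt t)" using t by (simp add: field_simps)
    also have "\<dots> \<le> 1 / (t * sqrt t)" using t st by (intro divide_right_mono) auto
    finally show ?thesis using pw by simp
  qed
  show ?thesis
    using has_integral_le[OF E1_hasint[OF assms] powr32_int[OF assms]] le by auto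
qed

lemma E1_integrand_cont: "0 < a \<Longrightarrow> continuous_on {a..b} (\<lambda>t::real. exp (- t) / t)"
  by (auto intro!: continuous_intros)

lemma E1_split: assumes "0 < a" "a \<le> y"
  shows "E1 a = integral {a..y} (\<lambda>t. exp (- t) / t) + E1 y"
proof -
  have i1: "((\<lambda>t. exp (- t) / t) has_integral integral {a..y} (\<lambda>t. exp (- t) / t)) {a..y}"
    by (intro integrable_integral integrable_continuous_interval E1_integrand_cont assms(1))
  have i2: "((\<lambda>t. exp (- t) / t) has_integral E1 y) {y..}"
    using assms by (intro E1_hasint) auto
  have "((\<lambda>t. exp (- t) / t) has_integral (integral {a..y} (\<lambda>t. exp (- t) / t) + E1 y)) {a..}"
    by (rule has_integral_split_inf[OF assms(2) i1 i2])
  then show ?thesis using E1_hasint[OF assms(1)] by (metis has_integral_unique)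
qed

lemma E1_deriv: assumes "x > 0"
  shows "(E1 has_real_derivative - (exp (- x) / x)) (at x)"
proof -
  define a where "a = x / 2"
  have a: "0 < a" "a < x" using assms by (auto simp: a_def)
  have "((\<lambda>y. integral {a..y} (\<lambda>t. exp (- t) / t)) has_real_derivative (exp (- x) / x))
      (at x within {a..x+1})"
    using a by (intro integral_has_real_derivative E1_integrand_cont) auto
  then have d: "((\<lambda>y. integral {a..y} (\<lambda>t. exp (- t) / t)) has_real_derivative (exp (- x) / x)) (at x)"
    using a at_within_Icc_at[of a x "x+1"] by simp
  have d2: "((\<lambda>y. E1 a - integral {a..y} (\<lambda>t. exp (- t) / t)) has_real_derivative - (exp (- x) / x)) (at x)"
    using d by (auto intro!: derivative_eq_intros)
  have eq: "E1 a - integral {a..y} (\<lambda>t. exp (- t) / t) = E1 y" if "y \<in> {a<..}" for y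
  proof -
    have "a \<le> y" using that by simp
    from E1_split[OF a(1) this] show ?thesis by simp
  qed
  have xin: "x \<in> {a<..}" using a by simp
  show ?thesis
    by (rule has_field_derivative_transform_within_open[OF d2 _ xin]) (auto simp: eq)
qed

definition Q :: "real \<Rightarrow> real" where
  "Q x = (1 - exp (- x) + x * E1 x) / 2"

definition P :: "real \<Rightarrow> real" where
  "P x = (if x \<ge> 0 then Q x else - Q (- x))"

lemma Q_deriv: assumes "x > 0" shows "(Q has_real_derivative E x) (at x)"
proof -
  have "(Q has_real_derivative (exp (- x) + (E1 x + x * (- (exp (- x) / x)))) / 2) (at x)"
    unfolding Q_def using assms
    by (auto intro!: derivative_eq_intros E1_deriv)
  moreover have "(exp (- x) + (E1 x + x * (- (exp (- x) / x)))) / 2 = E x"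
    using assms by (simp add: E_def)
  ultimately show ?thesis by simp
qed

lemma xE1_le: "x \<ge> 0 \<Longrightarrow> x * E1 x \<le> exp (- x)"
  using E1_le_exp[of x] by (cases "x = 0") auto

lemma Q_bounds: assumes "x \<ge> 0" shows "0 \<le> Q x" "Q x \<le> 1/2"
proof -
  have "x * E1 x \<ge> 0" using assms E1_nonneg by simp
  moreover have "exp (- x) \<le> 1" using assms by simp
  ultimately show "0 \<le> Q x" unfolding Q_def by simp
  show "Q x \<le> 1/2" using xE1_le[OF assms] unfolding Q_def by simp
qed

lemma Q_le_sqrt: assumes "x \<ge> 0" shows "Q x \<le> (x + 2 * sqrt x) / 2"
proof (cases "x = 0")
  case True then show ?thesis by (simp add: Q_def)
next
  case False
  then have x: "x > 0" using assms by simp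
  have "1 - exp (- x) \<le> x" using exp_ge_add_one_self[of "- x"] by simp
  moreover have "x * E1 x \<le> x * (2 / sqrt x)"
    using E1_le_sqrt[OF x] x by (intro mult_left_mono) auto
  moreover have "x * (2 / sqrt x) = 2 * sqrt x"
    using x by (simp add: field_simps)
  ultimately show ?thesis unfolding Q_def by simp
qed

lemma P_odd: "P (- x) = - P x"
  by (auto simp: P_def Q_def)

lemma P_deriv: assumes "x \<noteq> 0" shows "(P has_real_derivative E x) (at x)"
proof (cases "x > 0")
  case True
  show ?thesis
    by (rule has_field_derivative_transform_within_open[OF Q_deriv[OF True], where S="{0<..}"])
       (use True in \<open>auto simp: P_def\<close>)
next
  case False
  then have x: "x < 0" using assms by simp
  have "((\<lambda>y. - Q (- y)) has_real_derivative - (E (- x) * (- 1))) (at x)"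
    using x by (auto intro!: derivative_eq_intros DERIV_chain2[OF Q_deriv])
  then have d: "((\<lambda>y. - Q (- y)) has_real_derivative E x) (at x)"
    by (simp add: E_even)
  show ?thesis
    by (rule has_field_derivative_transform_within_open[OF d, where S="{..<0}"])
       (use x in \<open>auto simp: P_def\<close>)
qed

lemma P_abs_le: "\<bar>P x\<bar> \<le> (\<bar>x\<bar> + 2 * sqrt \<bar>x\<bar>) / 2"
  using Q_le_sqrt[of "\<bar>x\<bar>"] Q_bounds[of "\<bar>x\<bar>"]
  by (cases "x \<ge> 0") (auto simp: P_def)

lemma P_cont0: "isCont P 0"
proof -
  have "((\<lambda>x. (\<bar>x\<bar> + 2 * sqrt \<bar>x\<bar>) / 2) \<longlongrightarrow> (\<bar>0\<bar> + 2 * sqrt \<bar>0\<bar>) / 2) (at 0)"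
    by (intro tendsto_intros) auto
  then have l: "((\<lambda>x. (\<bar>x\<bar> + 2 * sqrt \<bar>x\<bar>) / 2) \<longlongrightarrow> 0) (at (0::real))" by simp
  have "norm (P x) \<le> norm ((\<bar>x\<bar> + 2 * sqrt \<bar>x\<bar>) / 2) * 1" for x
    using P_abs_le[of x] by simp
  then have "(P \<longlongrightarrow> 0) (at 0)"
    by (intro tendsto_0_le[OF l, of _ 1] always_eventually) auto
  moreover have "P 0 = 0" by (simp add: P_def Q_def)
  ultimately show ?thesis by (simp add: isCont_def)
qed

lemma P_cont: "isCont P x"
  by (cases "x = 0") (auto simp: P_cont0 intro: DERIV_isCont P_deriv)

lemma P_cont_on: "continuous_on S P"
  by (simp add: P_cont continuous_at_imp_continuous_on)

lemma E_int_Icc: assumes "a \<le> b"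
  shows "((\<lambda>\<eta>. E (\<eta> - s)) has_integral (P (b - s) - P (a - s))) {a..b}"
proof (rule fundamental_theorem_of_calculus_interior_strong[where S="{s}" and f="\<lambda>\<eta>. P (\<eta> - s)"])
  show "continuous_on {a..b} (\<lambda>\<eta>. P (\<eta> - s))"
    by (intro continuous_on_compose2[OF P_cont_on[of UNIV]] continuous_intros) auto
  fix x assume "x \<in> {a<..<b} - {s}"
  then have "x - s \<noteq> 0" by auto
  then have d: "(P has_real_derivative E (x - s)) (at (x - s))" by (rule P_deriv)
  have "((\<lambda>\<eta>. \<eta> - s) has_real_derivative 1) (at x)" by (auto intro!: derivative_eq_intros)
  from DERIV_chain2[OF d this]
  show "((\<lambda>\<eta>. P (\<eta> - s)) has_vector_derivative E (x - s)) (at x)"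
    unfolding has_real_derivative_iff_has_vector_derivative[symmetric] by simp
qed (use assms in auto)

lemma P_lim: "(P \<longlongrightarrow> 1/2) at_top"
proof -
  have ev: "eventually (\<lambda>x. (1 - exp (- x) + x * E1 x) / 2 = P x) at_top"
    by (rule eventually_at_top_linorderI[of 0]) (auto simp: P_def Q_def)
  have l1: "((\<lambda>x::real. (1 - exp (- x)) / 2) \<longlongrightarrow> 1/2) at_top" by real_asymp
  have l2: "((\<lambda>x::real. (1 - exp (- x) + exp (- x)) / 2) \<longlongrightarrow> 1/2) at_top" by simp
  have "((\<lambda>x. (1 - exp (- x) + x * E1 x) / 2) \<longlongrightarrow> 1/2) at_top"
  proof (rule tendsto_sandwich[OF _ _ l1 l2])
    show "\<forall>\<^sub>F x in at_top. (1 - exp (- x)) / 2 \<le> (1 - exp (- x) + x * E1 x) / 2"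
      by (rule eventually_at_top_linorderI[of 0]) (use E1_nonneg in auto)
    show "\<forall>\<^sub>F x in at_top. (1 - exp (- x) + x * E1 x) / 2 \<le> (1 - exp (- x) + exp (- x)) / 2"
      by (rule eventually_at_top_linorderI[of 0]) (use xE1_le in auto)
  qed
  then show ?thesis using ev by (rule Lim_transform_eventually)
qed

lemma E_int_Ici: "((\<lambda>\<eta>. E (\<eta> - s)) has_integral (1/2 - P (a - s))) {a..}"
proof (rule has_integral_to_inf)
  show "(\<lambda>\<eta>. E (\<eta> - s)) integrable_on {a..y}" for y
    by (cases "a \<le> y") (use E_int_Icc in auto)
  show "E (y - s) \<ge> 0" for y by (rule E_nonneg)
  have ev: "eventually (\<lambda>y. integral {a..y} (\<lambda>\<eta>. E (\<eta> - s)) = P (y - s) - P (a - s)) at_top"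
    by (rule eventually_at_top_linorderI[of a]) (use E_int_Icc in blast)
  have f: "filterlim (\<lambda>y::real. y - s) at_top at_top" by real_asymp
  have "((\<lambda>y. P (y - s) - P (a - s)) \<longlongrightarrow> 1/2 - P (a - s)) at_top"
    by (intro tendsto_intros filterlim_compose[OF P_lim f])
  then show "((\<lambda>y. integral {a..y} (\<lambda>\<eta>. E (\<eta> - s))) \<longlongrightarrow> 1/2 - P (a - s)) at_top"
    using ev by (simp add: tendsto_cong)
qed



lemma E_kernel_int: "((\<lambda>\<eta>. E (y - \<eta>)) has_integral (1/2 + P y)) {0..}"
  using E_int_Ici[of y 0] by (simp add: E_sym P_odd)

lemma P_mono: assumes "0 \<le> a" "a \<le> b" shows "P a \<le> P b"
proof -
  have "((\<lambda>\<eta>. E (\<eta> - 0)) has_integral (P (b - 0) - P (a - 0))) {a..b}"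
    using assms by (intro E_int_Icc)
  then have "0 \<le> P (b - 0) - P (a - 0)" by (rule has_integral_nonneg) (rule E_nonneg)
  then show ?thesis by simp
qed

lemma P_range: "-1/2 \<le> P x" "P x \<le> 1/2"
  using Q_bounds[of x] Q_bounds[of "-x"] by (auto simp: P_def)

lemma E1_abs: "E1 \<bar>x\<bar> = E1 x" by (simp add: E1_def)

lemma E1_antimono: assumes "0 < a" "a \<le> b" shows "E1 b \<le> E1 a"
proof -
  have "integral {a..b} (\<lambda>t. exp (- t) / t) \<ge> 0"
    using assms by (intro integral_nonneg integrable_continuous_interval E1_integrand_cont) auto
  then show ?thesis using E1_split[OF assms] by simp
qed

lemma E_antimono: assumes "0 < \<bar>u\<bar>" "\<bar>u\<bar> \<le> \<bar>v\<bar>" shows "E v \<le> E u"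
  using E1_antimono[OF assms] by (simp add: E_def E1_abs)

definition G :: "(real \<Rightarrow> real) \<Rightarrow> real \<Rightarrow> real" where
  "G \<phi> y = integral {0..} (\<lambda>\<eta>. E (y - \<eta>) * \<phi> \<eta>)"

lemma E_meas: "(\<lambda>\<eta>. E (y - \<eta>)) \<in> borel_measurable (lebesgue_on {0..})"
  using E_kernel_int[of y] by (intro integrable_imp_measurable) (auto simp: integrable_on_def)

lemma G_integrable:
  assumes "continuous_on {0..} \<phi>" "\<And>x. x \<ge> 0 \<Longrightarrow> \<bar>\<phi> x\<bar> \<le> B"
  shows "(\<lambda>\<eta>. E (y - \<eta>) * \<phi> \<eta>) integrable_on {0..}"
proof (rule measurable_bounded_by_integrable_imp_integrable)
  show "(\<lambda>\<eta>. E (y - \<eta>) * \<phi> \<eta>) \<in> borel_measurable (lebesgue_on {0..})"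
    by (intro borel_measurable_times E_meas continuous_imp_measurable_on_sets_lebesgue assms(1)) auto
  show "(\<lambda>\<eta>. B * E (y - \<eta>)) integrable_on {0..}"
    using has_integral_mult_right[OF E_kernel_int[of y], of B] by (auto simp: integrable_on_def)
  show "norm (E (y - \<eta>) * \<phi> \<eta>) \<le> B * E (y - \<eta>)" if "\<eta> \<in> {0..}" for \<eta>
    using assms(2)[of \<eta>] that E_nonneg[of "y - \<eta>"]
    by (auto simp: abs_mult mult.commute[of B] intro!: mult_left_mono)
qed auto

lemma G_bounds:
  assumes "continuous_on {0..} \<phi>" "\<And>x. x \<ge> 0 \<Longrightarrow> 0 \<le> \<phi> x \<and> \<phi> x \<le> B"
  shows "0 \<le> G \<phi> y" "G \<phi> y \<le> B"
proof -
  have B: "B \<ge> 0" using assms(2)[of 0] by auto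
  have i: "(\<lambda>\<eta>. E (y - \<eta>) * \<phi> \<eta>) integrable_on {0..}"
    using assms by (intro G_integrable[of _ B]) auto
  show "0 \<le> G \<phi> y" unfolding G_def
    using assms(2) E_nonneg by (intro integral_nonneg i) auto
  have "G \<phi> y \<le> B * (1/2 + P y)"
    unfolding G_def
    using assms(2) E_nonneg
    by (intro has_integral_le[OF integrable_integral[OF i] has_integral_mult_right[OF E_kernel_int[of y], of B]])
       (auto simp: mult.commute[of B] intro!: mult_left_mono)
  also have "\<dots> \<le> B * 1" using P_range[of y] B by (intro mult_left_mono) auto
  finally show "G \<phi> y \<le> B" by simp
qed

lemma G_mono:
  assumes "continuous_on {0..} \<phi>" "\<And>x. x \<ge> 0 \<Longrightarrow> \<bar>\<phi> x\<bar> \<le> B"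
    "continuous_on {0..} \<psi>" "\<And>x. x \<ge> 0 \<Longrightarrow> \<bar>\<psi> x\<bar> \<le> B"
    "\<And>x. x \<ge> 0 \<Longrightarrow> \<phi> x \<le> \<psi> x"
  shows "G \<phi> y \<le> G \<psi> y"
  unfolding G_def using assms E_nonneg
  by (intro integral_le G_integrable[of _ B]) (auto intro!: mult_left_mono)

lemma G_lim:
  assumes "\<And>n. continuous_on {0..} (\<phi>s n)" "\<And>n x. x \<ge> 0 \<Longrightarrow> \<bar>\<phi>s n x\<bar> \<le> B"
    "\<And>x. x \<ge> 0 \<Longrightarrow> (\<lambda>n. \<phi>s n x) \<longlonglongrightarrow> \<phi> x"
  shows "(\<lambda>n. G (\<phi>s n) y) \<longlonglongrightarrow> G \<phi> y"
  unfolding G_def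
proof (rule dominated_convergence(2))
  show "(\<lambda>\<eta>. E (y - \<eta>) * \<phi>s n \<eta>) integrable_on {0..}" for n
    using assms by (intro G_integrable[of _ B]) auto
  show "(\<lambda>\<eta>. B * E (y - \<eta>)) integrable_on {0..}"
    using has_integral_mult_right[OF E_kernel_int[of y], of B] by (auto simp: integrable_on_def)
  show "norm (E (y - \<eta>) * \<phi>s n \<eta>) \<le> B * E (y - \<eta>)" if "\<eta> \<in> {0..}" for n \<eta>
    using assms(2)[of \<eta> n] that E_nonneg[of "y - \<eta>"]
    by (auto simp: abs_mult mult.commute[of B] intro!: mult_left_mono)
  show "(\<lambda>n. E (y - \<eta>) * \<phi>s n \<eta>) \<longlonglongrightarrow> E (y - \<eta>) * \<phi> \<eta>" if "\<eta> \<in> {0..}" for \<eta>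
    using assms(3)[of \<eta>] that by (auto intro!: tendsto_intros)
qed

lemma G_hasint:
  assumes "continuous_on {0..} \<phi>" "\<And>x. x \<ge> 0 \<Longrightarrow> \<bar>\<phi> x\<bar> \<le> B"
  shows "((\<lambda>\<eta>. E (y - \<eta>) * \<phi> \<eta>) has_integral G \<phi> y) {0..}"
  unfolding G_def using G_integrable[OF assms] by (rule integrable_integral)

lemma spike_le:
  fixes f g :: "real \<Rightarrow> real"
  assumes "(f has_integral i) S" "(g has_integral j) S" "negligible N"
    "\<And>x. x \<in> S - N \<Longrightarrow> f x \<le> g x"
  shows "i \<le> j"
proof -
  have f': "((\<lambda>x. if x \<in> N then 0 else f x) has_integral i) S"
    by (rule has_integral_spike[OF assms(3) _ assms(1)]) auto
  have g': "((\<lambda>x. if x \<in> N then 0 else g x) has_integral j) S"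
    by (rule has_integral_spike[OF assms(3) _ assms(2)]) auto
  show ?thesis by (rule has_integral_le[OF f' g']) (use assms(4) in auto)
qed

lemma G_holder_aux:
  assumes "continuous_on {0..} \<phi>" "\<And>x. x \<ge> 0 \<Longrightarrow> 0 \<le> \<phi> x \<and> \<phi> x \<le> B"
    and y: "0 \<le> y" "y < y'"
  shows "G \<phi> y - G \<phi> y' \<le> 2 * B * P ((y' - y) / 2)"
    and "G \<phi> y' - G \<phi> y \<le> 2 * B * P ((y' - y) / 2)"
proof -
  define m where "m = (y + y') / 2"
  have m: "0 \<le> m" "y < m" "m < y'" "m - y = (y' - y) / 2" "m - y' = - ((y' - y) / 2)"
    using y by (auto simp: m_def field_simps)
  have B: "B \<ge> 0" using assms(2)[of 0] by auto
  have ab: "\<And>x. x \<ge> 0 \<Longrightarrow> \<bar>\<phi> x\<bar> \<le> B" using assms(2) by fastforce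
  have i1: "((\<lambda>\<eta>. E (y - \<eta>) * \<phi> \<eta>) has_integral G \<phi> y) {0..}"
    by (rule G_hasint[OF assms(1) ab])
  have i2: "((\<lambda>\<eta>. E (y' - \<eta>) * \<phi> \<eta>) has_integral G \<phi> y') {0..}"
    by (rule G_hasint[OF assms(1) ab])
  have neg: "negligible {y, y'}" by simp
  have Py: "P y \<le> P y'" using y by (intro P_mono) auto
  have k1: "((\<lambda>\<eta>. E (\<eta> - y) - E (\<eta> - y')) has_integral
      ((P (m - y) - P (0 - y)) - (P (m - y') - P (0 - y')))) {0..m}"
    using m by (intro has_integral_diff E_int_Icc) auto
  have k1': "((\<lambda>\<eta>. if \<eta> \<in> {0..m} then B * (E (\<eta> - y) - E (\<eta> - y')) else 0) has_integral
      B * ((P (m - y) - P (0 - y)) - (P (m - y') - P (0 - y')))) {0..}"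
    using has_integral_mult_right[OF k1, of B] by (subst has_integral_restrict) auto
  have "G \<phi> y - G \<phi> y' \<le> B * ((P (m - y) - P (0 - y)) - (P (m - y') - P (0 - y')))"
  proof (rule spike_le[OF has_integral_diff[OF i1 i2] k1' neg])
    fix \<eta> assume "\<eta> \<in> {0..} - {y, y'}"
    then have e: "0 \<le> \<eta>" "\<eta> \<noteq> y" "\<eta> \<noteq> y'" by auto
    have ph: "0 \<le> \<phi> \<eta>" "\<phi> \<eta> \<le> B" using assms(2) e by auto
    show "E (y - \<eta>) * \<phi> \<eta> - E (y' - \<eta>) * \<phi> \<eta>
        \<le> (if \<eta> \<in> {0..m} then B * (E (\<eta> - y) - E (\<eta> - y')) else 0)"
    proof (cases "\<eta> \<le> m")
      case True
      have "E (\<eta> - y') \<le> E (\<eta> - y)"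
        using True e m by (intro E_antimono) auto
      then have "(E (\<eta> - y) - E (\<eta> - y')) * \<phi> \<eta> \<le> (E (\<eta> - y) - E (\<eta> - y')) * B"
        using ph by (intro mult_left_mono) auto
      then show ?thesis using True e by (simp add: E_sym[of y] E_sym[of y'] algebra_simps)
    next
      case False
      have "E (\<eta> - y) \<le> E (\<eta> - y')"
        using False e m by (intro E_antimono) auto
      then have "(E (\<eta> - y) - E (\<eta> - y')) * \<phi> \<eta> \<le> 0"
        using ph by (intro mult_nonpos_nonneg) auto
      then show ?thesis using False e by (simp add: E_sym[of y] E_sym[of y'] algebra_simps)
    qed
  qed
  also have "\<dots> = B * (2 * P ((y' - y) / 2) + P y - P y')"
    unfolding m by (simp add: P_odd algebra_simps)
  also have "\<dots> \<le> B * (2 * P ((y' - y) / 2))"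
    using Py B by (intro mult_left_mono) auto
  finally show "G \<phi> y - G \<phi> y' \<le> 2 * B * P ((y' - y) / 2)" by simp
  have k2: "((\<lambda>\<eta>. E (\<eta> - y') - E (\<eta> - y)) has_integral
      ((1/2 - P (m - y')) - (1/2 - P (m - y)))) {m..}"
    by (intro has_integral_diff E_int_Ici)
  have k2': "((\<lambda>\<eta>. if \<eta> \<in> {m..} then B * (E (\<eta> - y') - E (\<eta> - y)) else 0) has_integral
      B * ((1/2 - P (m - y')) - (1/2 - P (m - y)))) {0..}"
  proof -
    have "{m..} \<subseteq> {0..}" using m by auto
    then show ?thesis using has_integral_mult_right[OF k2, of B] by (subst has_integral_restrict) auto
  qed
  have "G \<phi> y' - G \<phi> y \<le> B * ((1/2 - P (m - y')) - (1/2 - P (m - y)))"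
  proof (rule spike_le[OF has_integral_diff[OF i2 i1] k2' neg])
    fix \<eta> assume "\<eta> \<in> {0..} - {y, y'}"
    then have e: "0 \<le> \<eta>" "\<eta> \<noteq> y" "\<eta> \<noteq> y'" by auto
    have ph: "0 \<le> \<phi> \<eta>" "\<phi> \<eta> \<le> B" using assms(2) e by auto
    show "E (y' - \<eta>) * \<phi> \<eta> - E (y - \<eta>) * \<phi> \<eta>
        \<le> (if \<eta> \<in> {m..} then B * (E (\<eta> - y') - E (\<eta> - y)) else 0)"
    proof (cases "m \<le> \<eta>")
      case True
      have "E (\<eta> - y) \<le> E (\<eta> - y')"
        using True e m by (intro E_antimono) auto
      then have "(E (\<eta> - y') - E (\<eta> - y)) * \<phi> \<eta> \<le> (E (\<eta> - y') - E (\<eta> - y)) * B"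
        using ph by (intro mult_left_mono) auto
      then show ?thesis using True e by (simp add: E_sym[of y] E_sym[of y'] algebra_simps)
    next
      case False
      have "E (\<eta> - y') \<le> E (\<eta> - y)"
        using False e m by (intro E_antimono) auto
      then have "(E (\<eta> - y') - E (\<eta> - y)) * \<phi> \<eta> \<le> 0"
        using ph by (intro mult_nonpos_nonneg) auto
      then show ?thesis using False e by (simp add: E_sym[of y] E_sym[of y'] algebra_simps)
    qed
  qed
  also have "\<dots> = B * (2 * P ((y' - y) / 2))"
    unfolding m by (simp add: P_odd algebra_simps)
  finally show "G \<phi> y' - G \<phi> y \<le> 2 * B * P ((y' - y) / 2)" by simp
qed

lemma G_holder:
  assumes "continuous_on {0..} \<phi>" "\<And>x. x \<ge> 0 \<Longrightarrow> 0 \<le> \<phi> x \<and> \<phi> x \<le> B"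
    and y: "0 \<le> y" "0 \<le> y'"
  shows "\<bar>G \<phi> y - G \<phi> y'\<bar> \<le> 3 * B * sqrt \<bar>y - y'\<bar>"
proof -
  have B: "B \<ge> 0" using assms(2)[of 0] by auto
  have main: "\<bar>G \<phi> a - G \<phi> b\<bar> \<le> 3 * B * sqrt \<bar>a - b\<bar>" if ab: "0 \<le> a" "a < b" for a b
  proof -
    define d where "d = b - a"
    have d: "d > 0" using ab by (simp add: d_def)
    have h1: "\<bar>G \<phi> a - G \<phi> b\<bar> \<le> 2 * B * P (d / 2)"
      using G_holder_aux[OF assms(1,2) ab] unfolding d_def by linarith
    have "P (d / 2) \<le> (d / 2 + 2 * sqrt (d / 2)) / 2"
      using P_abs_le[of "d/2"] d by simp
    also have "\<dots> \<le> (d / 2 + 2 * sqrt d) / 2" using d by simp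
    finally have "2 * B * P (d / 2) \<le> 2 * B * ((d / 2 + 2 * sqrt d) / 2)"
      using B by (intro mult_left_mono) auto
    then have h2: "\<bar>G \<phi> a - G \<phi> b\<bar> \<le> B * (d / 2 + 2 * sqrt d)"
      using h1 by simp
    have ga: "0 \<le> G \<phi> a" "G \<phi> a \<le> B" using G_bounds[OF assms(1,2)] by auto
    have gb: "0 \<le> G \<phi> b" "G \<phi> b \<le> B" using G_bounds[OF assms(1,2)] by auto
    show ?thesis
    proof (cases "d \<le> 1")
      case True
      have "d = sqrt d * sqrt d" using d by simp
      also have "\<dots> \<le> 1 * sqrt d" using True d by (intro mult_right_mono) auto
      finally have "d \<le> sqrt d" by simp
      then have "d / 2 + 2 * sqrt d \<le> 3 * sqrt d" using real_sqrt_ge_zero[of d] d by linarith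
      then have "B * (d / 2 + 2 * sqrt d) \<le> B * (3 * sqrt d)" using B by (intro mult_left_mono)
      then show ?thesis using h2 ab by (simp add: d_def abs_minus_commute)
    next
      case False
      then have "1 \<le> sqrt d" by simp
      then have "1 \<le> 3 * sqrt d" by linarith
      then have "B * 1 \<le> B * (3 * sqrt d)" using B by (intro mult_left_mono) auto
      moreover have "\<bar>G \<phi> a - G \<phi> b\<bar> \<le> B" using ga gb by linarith
      ultimately show ?thesis using ab by (simp add: d_def abs_minus_commute)
    qed
  qed
  show ?thesis
  proof (cases y y' rule: linorder_cases)
    case less then show ?thesis using main[of y y'] y by simp
  next
    case equal then show ?thesis by simp
  next
    case greater then show ?thesis using main[of y' y] y by (simp add: abs_minus_commute)
  qed
qed

lemma G_cont:
  assumes "continuous_on {0..} \<phi>" "\<And>x. x \<ge> 0 \<Longrightarrow> 0 \<le> \<phi> x \<and> \<phi> x \<le> B"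
  shows "continuous_on {0..} (G \<phi>)"
  unfolding continuous_on_iff
proof (intro ballI allI impI)
  fix x e :: real assume x: "x \<in> {0..}" and e: "0 < e"
  have B: "B \<ge> 0" using assms(2)[of 0] by auto
  define d where "d = (e / (3 * B + 1))^2"
  have d: "d > 0" using e B by (simp add: d_def)
  show "\<exists>d>0. \<forall>x'\<in>{0..}. dist x' x < d \<longrightarrow> dist (G \<phi> x') (G \<phi> x) < e"
  proof (intro exI[of _ d] conjI ballI impI d)
    fix x' assume x': "x' \<in> {0..}" "dist x' x < d"
    have "\<bar>G \<phi> x' - G \<phi> x\<bar> \<le> 3 * B * sqrt \<bar>x' - x\<bar>"
      using x x' by (intro G_holder[OF assms]) auto
    also have "\<dots> \<le> (3 * B + 1) * sqrt \<bar>x' - x\<bar>" by (simp add: mult_right_mono)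
    also have "sqrt \<bar>x' - x\<bar> < sqrt d" using x' by (simp add: dist_real_def)
    then have "(3 * B + 1) * sqrt \<bar>x' - x\<bar> < (3 * B + 1) * sqrt d" using B by simp
    also have "(3 * B + 1) * sqrt d = e" using e B by (simp add: d_def)
    finally show "dist (G \<phi> x') (G \<phi> x) < e" by (simp add: dist_real_def)
  qed
qed

lemma within_Ici_eq: assumes "0 \<le> (x::real)" "x < b"
  shows "at x within {0..} = at x within {0..b}"
  by (rule at_within_nhd[of x "{..<b}"]) (use assms in auto)

lemma exp_int_Icc: fixes r y :: real assumes "r \<noteq> 0" "0 \<le> y"
  shows "((\<lambda>\<eta>. exp (- r * \<eta>)) has_integral (1 - exp (- r * y)) / r) {0..y}"
proof -
  have "((\<lambda>\<eta>. exp (- r * \<eta>)) has_integral ((- exp (- r * y) / r) - (- exp (- r * 0) / r))) {0..y}"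
    using assms
    by (intro fundamental_theorem_of_calculus[where a=0 and b=y and f="\<lambda>\<eta>. - exp (- r * \<eta>) / r"])
       (auto intro!: derivative_eq_intros simp flip: has_real_derivative_iff_has_vector_derivative)
  then show ?thesis by (simp add: diff_divide_distrib)
qed

lemma integrable_exp_h_Icc:
  fixes h :: "real \<Rightarrow> real" and r y :: real
  assumes "continuous_on {0..} h" "0 \<le> y"
  shows "(\<lambda>\<eta>. exp (- r * \<eta>) * h \<eta>) integrable_on {0..y}"
proof -
  have "continuous_on {0..y} h" by (rule continuous_on_subset[OF assms(1)]) auto
  then show ?thesis by (intro integrable_continuous_interval continuous_intros)
qed

lemma integrable_exp_h_Ici:
  fixes h :: "real \<Rightarrow> real" and r a H :: real
  assumes "continuous_on {0..} h" "\<And>x. x \<ge> 0 \<Longrightarrow> \<bar>h x\<bar> \<le> H" "r > 0" "0 \<le> a"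
  shows "(\<lambda>\<eta>. exp (- r * \<eta>) * h \<eta>) integrable_on {a..}"
proof (rule measurable_bounded_by_integrable_imp_integrable)
  show "(\<lambda>\<eta>. exp (- r * \<eta>) * h \<eta>) \<in> borel_measurable (lebesgue_on {a..})"
  proof -
    have "continuous_on {a..} h" by (rule continuous_on_subset[OF assms(1)]) (use assms(4) in auto)
    then show ?thesis by (intro continuous_imp_measurable_on_sets_lebesgue continuous_intros) auto
  qed
  show "(\<lambda>\<eta>. H * exp (- r * \<eta>)) integrable_on {a..}"
    using has_integral_mult_right[OF has_integral_exp_minus_to_infinity[OF assms(3), of a], of H]
    by (auto simp: integrable_on_def)
  show "norm (exp (- r * \<eta>) * h \<eta>) \<le> H * exp (- r * \<eta>)" if "\<eta> \<in> {a..}" for \<eta>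
    using assms(2)[of \<eta>] that assms(4) by (simp add: abs_mult mult.commute[of H])
qed auto

lemma exp_cancel_lemma: "exp (- r * x) * z * exp (r * x) = (z::real)"
proof -
  have "exp (- r * x) * exp (r * x) = 1" by (simp add: exp_add[symmetric])
  then show ?thesis by (simp add: algebra_simps)
qed

locale lin =
  fixes c M T :: real
  assumes c_pos: "c > 0" and M_pos: "M > 0" and T_pos: "T > 0"
begin

definition "Dd = sqrt (c^2 + 4 * M)"
definition "r1 = (c + Dd) / 2"
definition "r2 = (c - Dd) / 2"

lemma Dd_gt_c: "Dd > c"
proof -
  have "c^2 < c^2 + 4 * M" using M_pos by simp
  then have "sqrt (c^2) < Dd" unfolding Dd_def by (rule real_sqrt_less_mono)
  then show ?thesis using c_pos by simp
qed

lemma Dd_pos: "Dd > 0" using Dd_gt_c c_pos by simp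
lemma r1_pos: "r1 > 0" using Dd_pos c_pos by (simp add: r1_def)
lemma r2_neg: "r2 < 0" using Dd_gt_c by (simp add: r2_def)
lemma r1_r2: "r1 - r2 = Dd" by (simp add: r1_def r2_def field_simps)
lemma Dd_sq: "Dd^2 = c^2 + 4 * M" unfolding Dd_def using M_pos c_pos by simp
lemma r1_eq: "r1^2 = c * r1 + M"
  unfolding r1_def power2_eq_square using Dd_sq by (simp add: power2_eq_square field_simps)
lemma r2_eq: "r2^2 = c * r2 + M"
  unfolding r2_def power2_eq_square using Dd_sq by (simp add: power2_eq_square field_simps)
lemma r1r2: "r1 * r2 = - M"
  unfolding r1_def r2_def using Dd_sq by (simp add: power2_eq_square field_simps)

definition "IA h y = integral {0..y} (\<lambda>\<eta>. exp (- r2 * \<eta>) * h \<eta>)"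
definition "IB h y = integral {0..y} (\<lambda>\<eta>. exp (- r1 * \<eta>) * h \<eta>)"
definition "IC h = integral {0..} (\<lambda>\<eta>. exp (- r1 * \<eta>) * h \<eta>)"

definition "Lop h y = T * exp (r2 * y) + (exp (r2 * y) * (IA h y - IC h) + exp (r1 * y) * (IC h - IB h y)) / Dd"
definition "L1 h y = r2 * T * exp (r2 * y) + (r2 * exp (r2 * y) * (IA h y - IC h) + r1 * exp (r1 * y) * (IC h - IB h y)) / Dd"

lemma Lop_0: "Lop h 0 = T" by (simp add: Lop_def IA_def IB_def)

lemma I_deriv:
  assumes "continuous_on {0..} h" "0 \<le> x"
  shows "((\<lambda>y. integral {0..y} (\<lambda>\<eta>. exp (- r * \<eta>) * h \<eta>)) has_real_derivative exp (- r * x) * h x)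
     (at x within {0..})"
proof -
  have "((\<lambda>y. integral {0..y} (\<lambda>\<eta>. exp (- r * \<eta>) * h \<eta>)) has_real_derivative exp (- r * x) * h x)
     (at x within {0..x+1})"
    using assms by (intro integral_has_real_derivative continuous_intros continuous_on_subset[OF assms(1)]) auto
  then show ?thesis using within_Ici_eq[of x "x+1"] assms by simp
qed

definition "U h y = exp (r2 * y) * (IA h y - IC h)"
definition "V h y = exp (r1 * y) * (IC h - IB h y)"

lemma Lop_UV: "Lop h y = T * exp (r2 * y) + (U h y + V h y) / Dd"
  by (simp add: Lop_def U_def V_def)
lemma L1_UV: "L1 h y = r2 * T * exp (r2 * y) + (r2 * U h y + r1 * V h y) / Dd"
  by (simp add: L1_def U_def V_def mult.assoc)

lemma I_deriv':
  assumes "continuous_on {0..} h" "0 \<le> x"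
  shows "((\<lambda>y. integral {0..y} (\<lambda>\<eta>. exp (- r * \<eta>) * h \<eta>)) has_real_derivative h x / exp (r * x))
     (at x within {0..})"
proof -
  have "exp (- r * x) * h x = h x / exp (r * x)" by (simp add: exp_minus field_simps)
  then show ?thesis using I_deriv[OF assms, of r] by simp
qed

lemma exp_deriv_within: "((\<lambda>y. exp (r * y)) has_real_derivative exp (r * x) * r) (at x within S)"
  by (auto intro!: derivative_eq_intros)

lemma U_deriv:
  assumes "continuous_on {0..} h" "0 \<le> x"
  shows "(U h has_real_derivative r2 * U h x + h x) (at x within {0..})"
proof -
  have dA: "(IA h has_real_derivative h x / exp (r2 * x)) (at x within {0..})"
    unfolding IA_def by (rule I_deriv'[OF assms])
  show ?thesis unfolding U_def[abs_def]
    by (rule DERIV_cong[OF DERIV_mult'[OF exp_deriv_within DERIV_diff[OF dA DERIV_const]]])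
       (simp add: U_def algebra_simps)
qed

lemma V_deriv:
  assumes "continuous_on {0..} h" "0 \<le> x"
  shows "(V h has_real_derivative r1 * V h x - h x) (at x within {0..})"
proof -
  have dB: "(IB h has_real_derivative h x / exp (r1 * x)) (at x within {0..})"
    unfolding IB_def by (rule I_deriv'[OF assms])
  show ?thesis unfolding V_def[abs_def]
    by (rule DERIV_cong[OF DERIV_mult'[OF exp_deriv_within DERIV_diff[OF DERIV_const dB]]])
       (simp add: V_def algebra_simps)
qed

lemma Lop_deriv:
  assumes "continuous_on {0..} h" "0 \<le> x"
  shows "(Lop h has_real_derivative L1 h x) (at x within {0..})"
  unfolding Lop_UV[abs_def]
  by (rule DERIV_cong[OF DERIV_add[OF DERIV_cmult[OF exp_deriv_within]
        DERIV_cdivide[OF DERIV_add[OF U_deriv[OF assms] V_deriv[OF assms]]]]])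
     (simp add: L1_UV algebra_simps)

lemma L1_deriv:
  assumes "continuous_on {0..} h" "0 \<le> x"
  shows "(L1 h has_real_derivative c * L1 h x + M * Lop h x - h x) (at x within {0..})"
  unfolding L1_UV[abs_def]
proof (rule DERIV_cong[OF DERIV_add[OF DERIV_cmult[OF exp_deriv_within]
        DERIV_cdivide[OF DERIV_add[OF DERIV_cmult[OF U_deriv[OF assms]] DERIV_cmult[OF V_deriv[OF assms]]]]]])
  show "r2 * T * (exp (r2 * x) * r2) + (r2 * (r2 * U h x + h x) + r1 * (r1 * V h x - h x)) / Dd
      = c * (r2 * T * exp (r2 * x) + (r2 * U h x + r1 * V h x) / Dd) + M * Lop h x - h x"
  proof -
    have q: "r2 * r2 = c * r2 + M" "r1 * r1 = c * r1 + M"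
      using r1_eq r2_eq by (simp_all add: power2_eq_square)
    have hd: "(r2 * h x - r1 * h x) / Dd = - h x"
    proof -
      have "r2 * h x - r1 * h x = - (Dd * h x)" using r1_r2 by (simp add: algebra_simps)
      then show ?thesis using Dd_pos by simp
    qed
    have "r2 * T * (exp (r2 * x) * r2) + (r2 * (r2 * U h x + h x) + r1 * (r1 * V h x - h x)) / Dd
      = (r2 * r2) * T * exp (r2 * x) + ((r2 * r2) * U h x + (r1 * r1) * V h x) / Dd + (r2 * h x - r1 * h x) / Dd"
      by (simp add: algebra_simps add_divide_distrib diff_divide_distrib)
    also have "\<dots> = (c * r2 + M) * T * exp (r2 * x) + ((c * r2 + M) * U h x + (c * r1 + M) * V h x) / Dd - h x"
      unfolding q hd by simp
    also have "\<dots> = c * (r2 * T * exp (r2 * x) + (r2 * U h x + r1 * V h x) / Dd) + M * Lop h x - h x"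
      unfolding Lop_UV by (simp add: algebra_simps add_divide_distrib)
    finally show ?thesis .
  qed
qed

definition hyp :: "(real \<Rightarrow> real) \<Rightarrow> real \<Rightarrow> bool" where "hyp h H \<longleftrightarrow> continuous_on {0..} h \<and> (\<forall>x\<ge>0. \<bar>h x\<bar> \<le> H)"

lemma hypD: "hyp h H \<Longrightarrow> continuous_on {0..} h" "hyp h H \<Longrightarrow> x \<ge> 0 \<Longrightarrow> \<bar>h x\<bar> \<le> H"
  by (auto simp: hyp_def)

lemma IA_hasint: "hyp h H \<Longrightarrow> 0 \<le> y \<Longrightarrow> ((\<lambda>\<eta>. exp (- r2 * \<eta>) * h \<eta>) has_integral IA h y) {0..y}"
  unfolding IA_def by (intro integrable_integral integrable_exp_h_Icc hypD) auto
lemma IB_hasint: "hyp h H \<Longrightarrow> 0 \<le> y \<Longrightarrow> ((\<lambda>\<eta>. exp (- r1 * \<eta>) * h \<eta>) has_integral IB h y) {0..y}"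
  unfolding IB_def by (intro integrable_integral integrable_exp_h_Icc hypD) auto
lemma IC_hasint: "hyp h H \<Longrightarrow> ((\<lambda>\<eta>. exp (- r1 * \<eta>) * h \<eta>) has_integral IC h) {0..}"
  unfolding IC_def by (intro integrable_integral integrable_exp_h_Ici[where H=H] hypD r1_pos) auto

lemma tail_hasint: assumes "hyp h H" "0 \<le> y"
  shows "((\<lambda>\<eta>. exp (- r1 * \<eta>) * h \<eta>) has_integral (IC h - IB h y)) {y..}"
proof -
  have i: "((\<lambda>\<eta>. exp (- r1 * \<eta>) * h \<eta>) has_integral integral {y..} (\<lambda>\<eta>. exp (- r1 * \<eta>) * h \<eta>)) {y..}"
    using assms by (intro integrable_integral integrable_exp_h_Ici[where H=H] hypD r1_pos) auto
  have "((\<lambda>\<eta>. exp (- r1 * \<eta>) * h \<eta>) has_integral (IB h y + integral {y..} (\<lambda>\<eta>. exp (- r1 * \<eta>) * h \<eta>))) {0..}"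
    by (rule has_integral_split_inf[OF assms(2) IB_hasint[OF assms] i])
  then have "IC h = IB h y + integral {y..} (\<lambda>\<eta>. exp (- r1 * \<eta>) * h \<eta>)"
    using IC_hasint[OF assms(1)] by (metis has_integral_unique)
  then show ?thesis using i by simp
qed

lemma abs_int_bound:
  fixes f g :: "real \<Rightarrow> real"
  assumes "(f has_integral i) S" "(g has_integral j) S" "\<And>x. x \<in> S \<Longrightarrow> \<bar>f x\<bar> \<le> g x"
  shows "\<bar>i\<bar> \<le> j"
proof -
  have "i \<le> j" by (rule has_integral_le[OF assms(1,2)]) (use assms(3) in force)
  moreover have "- i \<le> j"
    by (rule has_integral_le[OF has_integral_neg[OF assms(1)] assms(2)]) (use assms(3) in force)
  ultimately show ?thesis by simp
qed

lemma IA_bound: assumes "hyp h H" "0 \<le> y"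
  shows "\<bar>IA h y\<bar> \<le> H * ((1 - exp (- r2 * y)) / r2)"
  by (rule abs_int_bound[OF IA_hasint[OF assms] has_integral_mult_right[OF exp_int_Icc[OF _ assms(2)]]])
     (use r2_neg hypD(2)[OF assms(1)] in \<open>auto simp: abs_mult mult.commute[of H] intro!: mult_left_mono\<close>)

lemma IC_bound: assumes "hyp h H"
  shows "\<bar>IC h\<bar> \<le> H * (exp (- r1 * 0) / r1)"
  by (rule abs_int_bound[OF IC_hasint[OF assms] has_integral_mult_right[OF has_integral_exp_minus_to_infinity[OF r1_pos]]])
     (use hypD(2)[OF assms(1)] in \<open>auto simp: abs_mult mult.commute[of H] intro!: mult_left_mono\<close>)

lemma tail_bound: assumes "hyp h H" "0 \<le> y"
  shows "\<bar>IC h - IB h y\<bar> \<le> H * (exp (- r1 * y) / r1)"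
  by (rule abs_int_bound[OF tail_hasint[OF assms] has_integral_mult_right[OF has_integral_exp_minus_to_infinity[OF r1_pos]]])
     (use hypD(2)[OF assms(1)] assms(2) in \<open>auto simp: abs_mult mult.commute[of H] intro!: mult_left_mono\<close>)

definition "Bd1 H = - r2 * T + (2 * H - r2 * H / r1) / Dd"

lemma L1_bound: assumes "hyp h H" "0 \<le> y"
  shows "\<bar>L1 h y\<bar> \<le> Bd1 H"
proof -
  have H: "H \<ge> 0" using hypD(2)[OF assms(1), of 0] by auto
  have e2: "0 < exp (r2 * y)" "exp (r2 * y) \<le> 1" using r2_neg assms(2)
    by (auto simp: mult_nonpos_nonneg)
  have a: "exp (r2 * y) * \<bar>IA h y\<bar> \<le> H / (- r2)"
  proof -
    have ee: "exp (r2 * y) * exp (- r2 * y) = 1" by (simp add: exp_add[symmetric])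
    have "exp (r2 * y) * \<bar>IA h y\<bar> \<le> exp (r2 * y) * (H * ((1 - exp (- r2 * y)) / r2))"
      using IA_bound[OF assms] e2 by (intro mult_left_mono) auto
    also have "\<dots> = H * ((exp (r2 * y) - exp (r2 * y) * exp (- r2 * y)) / r2)"
      by (simp add: algebra_simps)
    also have "\<dots> = H * ((exp (r2 * y) - 1) / r2)" unfolding ee ..
    also have "\<dots> = H * ((1 - exp (r2 * y)) / (- r2))"
      using r2_neg by (simp add: field_simps)
    also have "\<dots> \<le> H * (1 / (- r2))"
      using e2 r2_neg H by (intro mult_left_mono divide_right_mono) auto
    finally show ?thesis by simp
  qed
  have b: "exp (r2 * y) * \<bar>IC h\<bar> \<le> H / r1"
  proof -
    have "exp (r2 * y) * \<bar>IC h\<bar> \<le> 1 * (H / r1)"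
      using IC_bound[OF assms(1)] e2 H r1_pos by (intro mult_mono) auto
    then show ?thesis by simp
  qed
  have t: "exp (r1 * y) * \<bar>IC h - IB h y\<bar> \<le> H / r1"
  proof -
    have "exp (r1 * y) * \<bar>IC h - IB h y\<bar> \<le> exp (r1 * y) * (H * (exp (- r1 * y) / r1))"
      using tail_bound[OF assms] by (intro mult_left_mono) auto
    also have "\<dots> = H * (exp (r1 * y) * exp (- r1 * y)) / r1" by simp
    also have "\<dots> = H / r1" by (simp add: exp_add[symmetric])
    finally show ?thesis .
  qed
  define X where "X = r2 * T * exp (r2 * y)"
  define Y where "Y = r2 * exp (r2 * y) * (IA h y - IC h) + r1 * exp (r1 * y) * (IC h - IB h y)"
  have L: "L1 h y = X + Y / Dd" unfolding L1_def X_def Y_def ..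
  have "\<bar>L1 h y\<bar> \<le> \<bar>X\<bar> + \<bar>Y / Dd\<bar>" unfolding L by (rule abs_triangle_ineq)
  also have "\<bar>Y / Dd\<bar> = \<bar>Y\<bar> / Dd" using Dd_pos by (simp add: abs_divide)
  also have "\<bar>X\<bar> \<le> - r2 * T"
  proof -
    have "\<bar>X\<bar> = (- r2 * T) * exp (r2 * y)" unfolding X_def using r2_neg T_pos e2
      by (simp add: abs_mult)
    also have "\<dots> \<le> (- r2 * T) * 1"
      using r2_neg T_pos e2 mult_pos_pos[of "- r2" T] by (intro mult_left_mono) auto
    finally show ?thesis by simp
  qed
  also have "\<bar>Y\<bar> \<le> 2 * H - r2 * H / r1"
  proof -
    have y1: "\<bar>r2 * exp (r2 * y) * (IA h y - IC h)\<bar> \<le> (- r2) * (H / (- r2) + H / r1)"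
    proof -
      have "\<bar>IA h y - IC h\<bar> \<le> \<bar>IA h y\<bar> + \<bar>IC h\<bar>" by (rule abs_triangle_ineq4)
      then have "exp (r2 * y) * \<bar>IA h y - IC h\<bar> \<le> exp (r2 * y) * \<bar>IA h y\<bar> + exp (r2 * y) * \<bar>IC h\<bar>"
        using e2 by (simp add: distrib_left[symmetric] mult_left_mono)
      also have "\<dots> \<le> H / (- r2) + H / r1" using a b by (rule add_mono)
      finally have "exp (r2 * y) * \<bar>IA h y - IC h\<bar> \<le> H / (- r2) + H / r1" .
      then have "(- r2) * (exp (r2 * y) * \<bar>IA h y - IC h\<bar>) \<le> (- r2) * (H / (- r2) + H / r1)"
        using r2_neg by (intro mult_left_mono) auto
      moreover have "\<bar>r2 * exp (r2 * y) * (IA h y - IC h)\<bar> = (- r2) * (exp (r2 * y) * \<bar>IA h y - IC h\<bar>)"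
        using r2_neg e2 by (simp add: abs_mult)
      ultimately show ?thesis by simp
    qed
    have y2: "\<bar>r1 * exp (r1 * y) * (IC h - IB h y)\<bar> \<le> r1 * (H / r1)"
    proof -
      have "\<bar>r1 * exp (r1 * y) * (IC h - IB h y)\<bar> = r1 * (exp (r1 * y) * \<bar>IC h - IB h y\<bar>)"
        using r1_pos by (simp add: abs_mult)
      also have "\<dots> \<le> r1 * (H / r1)" using t r1_pos by (intro mult_left_mono) auto
      finally show ?thesis .
    qed
    have "\<bar>Y\<bar> \<le> (- r2) * (H / (- r2) + H / r1) + r1 * (H / r1)"
      unfolding Y_def by (rule order_trans[OF abs_triangle_ineq add_mono[OF y1 y2]])
    also have "(- r2) * (H / (- r2) + H / r1) + r1 * (H / r1) = 2 * H - r2 * H / r1"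
      using r2_neg r1_pos by (simp add: field_simps)
    finally show ?thesis .
  qed
  finally show ?thesis using Dd_pos by (simp add: Bd1_def divide_right_mono)
qed

lemma Lop_alt: "Lop h y = T * exp (r2 * y) + (exp (r2 * y) * (IA h y - IB h y) + (exp (r1 * y) - exp (r2 * y)) * (IC h - IB h y)) / Dd"
  unfolding Lop_def by (simp add: algebra_simps)

lemma exp_order: assumes "0 \<le> \<eta>" shows "exp (- r1 * \<eta>) \<le> exp (- r2 * \<eta>)"
  using r1_pos r2_neg assms by (simp add: mult_right_mono)

lemma exp_order2: assumes "0 \<le> y" shows "exp (r2 * y) \<le> exp (r1 * y)"
  using r1_pos r2_neg assms by (simp add: mult_right_mono)

lemma Lop_mono:
  assumes h: "hyp h H" and g: "hyp g H'" and le: "\<And>x. x \<ge> 0 \<Longrightarrow> h x \<le> g x" and y: "0 \<le> y"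
  shows "Lop h y \<le> Lop g y"
proof -
  have d1: "((\<lambda>\<eta>. (exp (- r2 * \<eta>) * g \<eta> - exp (- r2 * \<eta>) * h \<eta>)
       - (exp (- r1 * \<eta>) * g \<eta> - exp (- r1 * \<eta>) * h \<eta>)) has_integral
      ((IA g y - IA h y) - (IB g y - IB h y))) {0..y}"
    by (intro has_integral_diff IA_hasint[OF g y] IA_hasint[OF h y] IB_hasint[OF g y] IB_hasint[OF h y])
  have n1: "0 \<le> (IA g y - IA h y) - (IB g y - IB h y)"
  proof (rule has_integral_nonneg[OF d1])
    fix \<eta> assume "\<eta> \<in> {0..y}"
    then have "0 \<le> \<eta>" by simp
    then have "exp (- r1 * \<eta>) * (g \<eta> - h \<eta>) \<le> exp (- r2 * \<eta>) * (g \<eta> - h \<eta>)"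
      using le exp_order by (intro mult_right_mono) auto
    then show "0 \<le> (exp (- r2 * \<eta>) * g \<eta> - exp (- r2 * \<eta>) * h \<eta>)
       - (exp (- r1 * \<eta>) * g \<eta> - exp (- r1 * \<eta>) * h \<eta>)"
      by (simp add: algebra_simps)
  qed
  have d2: "((\<lambda>\<eta>. exp (- r1 * \<eta>) * g \<eta> - exp (- r1 * \<eta>) * h \<eta>) has_integral
      ((IC g - IB g y) - (IC h - IB h y))) {y..}"
    by (intro has_integral_diff tail_hasint[OF g y] tail_hasint[OF h y])
  have n2: "0 \<le> (IC g - IB g y) - (IC h - IB h y)"
  proof (rule has_integral_nonneg[OF d2])
    fix \<eta> assume "\<eta> \<in> {y..}"
    then have "0 \<le> \<eta>" using y by simp
    then have "0 \<le> exp (- r1 * \<eta>) * (g \<eta> - h \<eta>)"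
      using le by simp
    then show "0 \<le> exp (- r1 * \<eta>) * g \<eta> - exp (- r1 * \<eta>) * h \<eta>"
      by (simp add: algebra_simps)
  qed
  have "Lop g y - Lop h y = (exp (r2 * y) * ((IA g y - IA h y) - (IB g y - IB h y))
      + (exp (r1 * y) - exp (r2 * y)) * ((IC g - IB g y) - (IC h - IB h y))) / Dd"
    unfolding Lop_alt by (simp add: algebra_simps diff_divide_distrib add_divide_distrib)
  also have "\<dots> \<ge> 0"
    using n1 n2 exp_order2[OF y] Dd_pos by (intro divide_nonneg_pos add_nonneg_nonneg mult_nonneg_nonneg) auto
  finally show ?thesis by simp
qed

lemma hyp_const: "0 \<le> K \<Longrightarrow> hyp (\<lambda>_. K) K" unfolding hyp_def by auto
lemma hyp_zero: "hyp (\<lambda>_. 0) 0" unfolding hyp_def by auto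

lemma Lop_const: assumes "0 \<le> y" shows "Lop (\<lambda>_. K) y = T * exp (r2 * y) + K * (1 - exp (r2 * y)) / M"
proof -
  have r2n: "r2 \<noteq> 0" using r2_neg by simp
  have r1n: "r1 \<noteq> 0" using r1_pos by simp
  have a0: "IA (\<lambda>_. K) y = (1 - exp (- r2 * y)) / r2 * K"
    unfolding IA_def by (rule integral_unique[OF has_integral_mult_left[OF exp_int_Icc[OF r2n assms]]])
  have b0: "IB (\<lambda>_. K) y = (1 - exp (- r1 * y)) / r1 * K"
    unfolding IB_def by (rule integral_unique[OF has_integral_mult_left[OF exp_int_Icc[OF r1n assms]]])
  have c0: "IC (\<lambda>_. K) = exp (- r1 * 0) / r1 * K"
    unfolding IC_def by (rule integral_unique[OF has_integral_mult_left[OF has_integral_exp_minus_to_infinity[OF r1_pos]]])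
  have a: "IA (\<lambda>_. K) y = K * ((1 - exp (- r2 * y)) / r2)" using a0 by simp
  have b: "IB (\<lambda>_. K) y = K * ((1 - exp (- r1 * y)) / r1)" using b0 by simp
  have c: "IC (\<lambda>_. K) = K * (exp (- r1 * 0) / r1)" using c0 by simp
  have e1: "exp (r1 * y) * exp (- r1 * y) = 1" "exp (r2 * y) * exp (- r2 * y) = 1"
    by (simp_all add: exp_add[symmetric])
  have "Lop (\<lambda>_. K) y = T * exp (r2 * y) + K * ((exp (r2 * y) - exp (r2 * y) * exp (- r2 * y)) / r2
       - exp (r2 * y) / r1 + exp (r1 * y) * exp (- r1 * y) / r1) / Dd"
    unfolding Lop_def a b c by (simp add: algebra_simps diff_divide_distrib add_divide_distrib)
  also have "\<dots> = T * exp (r2 * y) + K * ((exp (r2 * y) - 1) / r2 - exp (r2 * y) / r1 + 1 / r1) / Dd"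
    unfolding e1 ..
  also have "\<dots> = T * exp (r2 * y) + K * ((exp (r2 * y) - 1) * (r1 - r2) / (r1 * r2)) / Dd"
    using r1_pos r2_neg by (simp add: field_simps)
  also have "\<dots> = T * exp (r2 * y) + K * (1 - exp (r2 * y)) / M"
    unfolding r1r2 r1_r2 using Dd_pos M_pos by (simp add: field_simps)
  finally show ?thesis .
qed

lemma Lop_lower: assumes "hyp h H" "\<And>x. x \<ge> 0 \<Longrightarrow> 0 \<le> h x" "0 \<le> y"
  shows "T * exp (r2 * y) \<le> Lop h y"
  using Lop_mono[OF hyp_zero assms(1) assms(2) assms(3)] Lop_const[OF assms(3), of 0] by simp

lemma Lop_upper: assumes "hyp h H" "\<And>x. x \<ge> 0 \<Longrightarrow> h x \<le> M * T" "0 \<le> y"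
  shows "Lop h y \<le> T"
proof -
  have "Lop h y \<le> Lop (\<lambda>_. M * T) y"
    using M_pos T_pos by (intro Lop_mono[OF assms(1) hyp_const assms(2) assms(3)]) auto
  also have "\<dots> = T" unfolding Lop_const[OF assms(3)] using M_pos by (simp add: field_simps)
  finally show ?thesis .
qed

lemma Lop_lim:
  assumes h: "\<And>k. hyp (hs k) H" and lim: "\<And>x. x \<ge> 0 \<Longrightarrow> (\<lambda>k. hs k x) \<longlonglongrightarrow> h x" and y: "0 \<le> y"
  shows "(\<lambda>k. Lop (hs k) y) \<longlonglongrightarrow> Lop h y"
proof -
  have H: "H \<ge> 0" using hypD(2)[OF h[of 0], of 0] by auto
  have A: "(\<lambda>k. IA (hs k) y) \<longlonglongrightarrow> IA h y"
    unfolding IA_def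
  proof (rule dominated_convergence(2))
    show "(\<lambda>\<eta>. exp (- r2 * \<eta>) * hs k \<eta>) integrable_on {0..y}" for k
      using IA_hasint[OF h y] by (auto simp: integrable_on_def)
    show "(\<lambda>\<eta>. H * exp (- r2 * \<eta>)) integrable_on {0..y}"
      by (intro integrable_continuous_interval continuous_intros)
    show "norm (exp (- r2 * \<eta>) * hs k \<eta>) \<le> H * exp (- r2 * \<eta>)" if "\<eta> \<in> {0..y}" for k \<eta>
      using hypD(2)[OF h, of \<eta> k] that by (simp add: abs_mult mult.commute[of H])
    show "(\<lambda>k. exp (- r2 * \<eta>) * hs k \<eta>) \<longlonglongrightarrow> exp (- r2 * \<eta>) * h \<eta>" if "\<eta> \<in> {0..y}" for \<eta>
      using lim[of \<eta>] that by (auto intro!: tendsto_intros)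
  qed
  have B: "(\<lambda>k. IB (hs k) y) \<longlonglongrightarrow> IB h y"
    unfolding IB_def
  proof (rule dominated_convergence(2))
    show "(\<lambda>\<eta>. exp (- r1 * \<eta>) * hs k \<eta>) integrable_on {0..y}" for k
      using IB_hasint[OF h y] by (auto simp: integrable_on_def)
    show "(\<lambda>\<eta>. H * exp (- r1 * \<eta>)) integrable_on {0..y}"
      by (intro integrable_continuous_interval continuous_intros)
    show "norm (exp (- r1 * \<eta>) * hs k \<eta>) \<le> H * exp (- r1 * \<eta>)" if "\<eta> \<in> {0..y}" for k \<eta>
      using hypD(2)[OF h, of \<eta> k] that by (simp add: abs_mult mult.commute[of H])
    show "(\<lambda>k. exp (- r1 * \<eta>) * hs k \<eta>) \<longlonglongrightarrow> exp (- r1 * \<eta>) * h \<eta>" if "\<eta> \<in> {0..y}" for \<eta>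
      using lim[of \<eta>] that by (auto intro!: tendsto_intros)
  qed
  have C: "(\<lambda>k. IC (hs k)) \<longlonglongrightarrow> IC h"
    unfolding IC_def
  proof (rule dominated_convergence(2))
    show "(\<lambda>\<eta>. exp (- r1 * \<eta>) * hs k \<eta>) integrable_on {0..}" for k
      using IC_hasint[OF h] by (auto simp: integrable_on_def)
    show "(\<lambda>\<eta>. H * exp (- r1 * \<eta>)) integrable_on {0..}"
      using has_integral_mult_right[OF has_integral_exp_minus_to_infinity[OF r1_pos, of 0], of H]
      by (auto simp: integrable_on_def)
    show "norm (exp (- r1 * \<eta>) * hs k \<eta>) \<le> H * exp (- r1 * \<eta>)" if "\<eta> \<in> {0..}" for k \<eta>
      using hypD(2)[OF h, of \<eta> k] that by (simp add: abs_mult mult.commute[of H])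
    show "(\<lambda>k. exp (- r1 * \<eta>) * hs k \<eta>) \<longlonglongrightarrow> exp (- r1 * \<eta>) * h \<eta>" if "\<eta> \<in> {0..}" for \<eta>
      using lim[of \<eta>] that by (auto intro!: tendsto_intros)
  qed
  show ?thesis unfolding Lop_def
    using Dd_pos by (intro tendsto_intros A B C) auto
qed

end

lemma pow4_diff: fixes a b T :: real
  assumes "0 \<le> a" "a \<le> T" "0 \<le> b" "b \<le> T"
  shows "\<bar>a^4 - b^4\<bar> \<le> 4 * T^3 * \<bar>a - b\<bar>"
proof -
  have e: "a^4 - b^4 = (a - b) * (a^3 + a^2 * b + a * b^2 + b^3)"
    by (simp add: algebra_simps power2_eq_square power3_eq_cube power4_eq_xxxx)
  have "a^3 \<le> T^3" "b^3 \<le> T^3" using assms by (auto intro: power_mono)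
  moreover have "a^2 * b \<le> T^2 * T" using assms by (intro mult_mono power_mono) auto
  moreover have "a * b^2 \<le> T * T^2" using assms by (intro mult_mono power_mono) auto
  moreover have "0 \<le> a^3 + a^2 * b + a * b^2 + b^3" using assms by simp
  ultimately have s: "\<bar>a^3 + a^2 * b + a * b^2 + b^3\<bar> \<le> 4 * T^3"
    by (simp add: power2_eq_square power3_eq_cube)
  have "\<bar>a^4 - b^4\<bar> = \<bar>a - b\<bar> * \<bar>a^3 + a^2 * b + a * b^2 + b^3\<bar>" unfolding e abs_mult ..
  also have "\<dots> \<le> \<bar>a - b\<bar> * (4 * T^3)" using s by (intro mult_left_mono) auto
  finally show ?thesis by (simp add: mult.commute)
qed

lemma lip_to_holder: fixes d L A :: real
  assumes "d \<le> L * \<bar>x - y\<bar>" "d \<le> 2 * A" "0 \<le> L" "0 \<le> A"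
  shows "d \<le> (L + 2 * A) * sqrt \<bar>x - y\<bar>"
proof (cases "\<bar>x - y\<bar> \<le> 1")
  case True
  have "\<bar>x - y\<bar> = sqrt \<bar>x - y\<bar> * sqrt \<bar>x - y\<bar>" by simp
  also have "\<dots> \<le> 1 * sqrt \<bar>x - y\<bar>" using True by (intro mult_right_mono) auto
  finally have "L * \<bar>x - y\<bar> \<le> L * sqrt \<bar>x - y\<bar>" using assms(3) by (intro mult_left_mono) auto
  moreover have "0 \<le> 2 * A * sqrt \<bar>x - y\<bar>" using assms by simp
  ultimately show ?thesis using assms(1) by (simp add: algebra_simps)
next
  case False
  then have "1 \<le> sqrt \<bar>x - y\<bar>" by simp
  then have "2 * A * 1 \<le> 2 * A * sqrt \<bar>x - y\<bar>" using assms by (intro mult_left_mono) auto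
  moreover have "0 \<le> L * sqrt \<bar>x - y\<bar>" using assms by simp
  ultimately show ?thesis using assms(2) by (simp add: algebra_simps)
qed

locale main = lin +
  assumes M_big: "4 * T^3 \<le> M"
begin

definition F :: "real \<Rightarrow> real" where "F v = M * v - v^4"

lemma F_mono: assumes "0 \<le> v" "v \<le> w" "w \<le> T" shows "F v \<le> F w"
proof -
  have "\<bar>w^4 - v^4\<bar> \<le> 4 * T^3 * \<bar>w - v\<bar>" using assms by (intro pow4_diff) auto
  also have "\<dots> \<le> M * (w - v)" using assms M_big by (simp add: mult_right_mono)
  finally show ?thesis unfolding F_def by (simp add: algebra_simps)
qed

lemma F_range: assumes "0 \<le> v" "v \<le> T" shows "0 \<le> F v" "F v \<le> M * T - T^4"
proof -
  have "F 0 \<le> F v" using assms by (intro F_mono) auto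
  then show "0 \<le> F v" by (simp add: F_def)
  have "F v \<le> F T" using assms by (intro F_mono) auto
  then show "F v \<le> M * T - T^4" by (simp add: F_def)
qed

lemma F_cont: "continuous_on S f \<Longrightarrow> continuous_on S (\<lambda>x. F (f x))"
  unfolding F_def by (intro continuous_intros)

lemma Lop_cont: assumes "hyp h H" shows "continuous_on {0..} (Lop h)"
proof -
  have "continuous (at x within {0..}) (Lop h)" if "x \<in> {0..}" for x
    using Lop_deriv[OF hypD(1)[OF assms], of x] that by (auto intro: DERIV_continuous)
  then show ?thesis by (simp add: continuous_on_eq_continuous_within)
qed

lemma Lop_lip: assumes "hyp h H" "0 \<le> x" "0 \<le> y"
  shows "\<bar>Lop h x - Lop h y\<bar> \<le> Bd1 H * \<bar>x - y\<bar>"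
  using field_differentiable_bound[of "{0..}" "Lop h" "L1 h" "Bd1 H" x y]
    Lop_deriv[OF hypD(1)[OF assms(1)]] L1_bound[OF assms(1)] assms(2,3)
  by (auto simp: convex_real_interval)

definition "HH = M * T"

lemma HH_pos: "HH > 0" using M_pos T_pos by (simp add: HH_def)

definition "goodg g \<longleftrightarrow> continuous_on {0..} g \<and> (\<forall>x\<ge>0. 0 \<le> g x \<and> g x \<le> T^4)"

primrec Uk :: "(real \<Rightarrow> real) \<Rightarrow> nat \<Rightarrow> real \<Rightarrow> real" where
  "Uk g 0 = (\<lambda>_. 0)"
| "Uk g (Suc k) = Lop (\<lambda>x. g x + F (Uk g k x))"

definition "goodu u \<longleftrightarrow> continuous_on {0..} u \<and> (\<forall>x\<ge>0. 0 \<le> u x \<and> u x \<le> T)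
   \<and> (\<forall>x\<ge>0. \<forall>y\<ge>0. \<bar>u x - u y\<bar> \<le> Bd1 HH * \<bar>x - y\<bar>)"

lemma hyp_step: assumes "goodg g" "goodu u"
  shows "hyp (\<lambda>x. g x + F (u x)) HH"
    and "\<And>x. x \<ge> 0 \<Longrightarrow> 0 \<le> g x + F (u x)"
    and "\<And>x. x \<ge> 0 \<Longrightarrow> g x + F (u x) \<le> M * T"
proof -
  show "0 \<le> g x + F (u x)" if "x \<ge> 0" for x
    using assms that F_range[of "u x"] by (auto simp: goodg_def goodu_def)
  show "g x + F (u x) \<le> M * T" if "x \<ge> 0" for x
    using assms that F_range[of "u x"] by (fastforce simp: goodg_def goodu_def)
  then show "hyp (\<lambda>x. g x + F (u x)) HH"
    using assms \<open>\<And>x. x \<ge> 0 \<Longrightarrow> 0 \<le> g x + F (u x)\<close>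
    unfolding hyp_def HH_def goodg_def goodu_def
    by (auto intro!: continuous_intros F_cont)
qed

lemma Bd1_nonneg: assumes "0 \<le> H" shows "0 \<le> Bd1 H"
proof -
  have "0 \<le> - r2 * T" using r2_neg T_pos by (simp add: mult_nonpos_nonneg)
  moreover have "0 \<le> (2 * H - r2 * H / r1) / Dd"
  proof -
    have "r2 * H \<le> 0" using r2_neg assms by (simp add: mult_nonpos_nonneg)
    then have "r2 * H / r1 \<le> 0" using r1_pos by (simp add: divide_nonpos_pos)
    then have "0 \<le> - r2 * H / r1" by simp
    then show ?thesis using assms Dd_pos by (intro divide_nonneg_pos) auto
  qed
  ultimately show ?thesis unfolding Bd1_def by simp
qed

lemma Bd1HH: "0 \<le> Bd1 HH" using HH_pos by (intro Bd1_nonneg) simp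

lemma lip_cont: fixes u :: "real \<Rightarrow> real"
  assumes "\<And>x y. x \<ge> 0 \<Longrightarrow> y \<ge> 0 \<Longrightarrow> \<bar>u x - u y\<bar> \<le> L * \<bar>x - y\<bar>" "0 \<le> L"
  shows "continuous_on {0..} u"
  unfolding continuous_on_iff
proof (intro ballI allI impI)
  fix x e :: real assume x: "x \<in> {0..}" and e: "0 < e"
  show "\<exists>d>0. \<forall>x'\<in>{0..}. dist x' x < d \<longrightarrow> dist (u x') (u x) < e"
  proof (intro exI[of _ "e / (L + 1)"] conjI ballI impI)
    show "0 < e / (L + 1)" using e assms(2) by simp
    fix x' assume x': "x' \<in> {0..}" "dist x' x < e / (L + 1)"
    have "\<bar>u x' - u x\<bar> \<le> L * \<bar>x' - x\<bar>" using x x' assms(1) by auto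
    also have "\<dots> \<le> (L + 1) * \<bar>x' - x\<bar>" by (simp add: mult_right_mono)
    also have "\<dots> < (L + 1) * (e / (L + 1))"
      using x' assms(2) by (intro mult_strict_left_mono) (auto simp: dist_real_def)
    also have "\<dots> = e" using assms(2) by simp
    finally show "dist (u x') (u x) < e" by (simp add: dist_real_def)
  qed
qed

lemma goodu_zero: "goodu (\<lambda>_. 0)"
  using T_pos Bd1HH by (auto simp: goodu_def)

lemma goodu_Lop: assumes "goodg g" "goodu u"
  shows "goodu (Lop (\<lambda>x. g x + F (u x)))"
    and "\<And>x. x \<ge> 0 \<Longrightarrow> T * exp (r2 * x) \<le> Lop (\<lambda>x. g x + F (u x)) x"
proof -
  note h = hyp_step[OF assms]
  show "T * exp (r2 * x) \<le> Lop (\<lambda>x. g x + F (u x)) x" if "x \<ge> 0" for x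
    by (rule Lop_lower[OF h(1) h(2) that])
  moreover have "0 \<le> T * exp (r2 * x)" for x using T_pos by simp
  ultimately show "goodu (Lop (\<lambda>x. g x + F (u x)))"
    unfolding goodu_def
    using Lop_cont[OF h(1)] Lop_upper[OF h(1) h(3)] Lop_lip[OF h(1)]
    by (meson order_trans)
qed

lemma Uk_good: assumes "goodg g" shows "goodu (Uk g k)"
proof (induction k)
  case 0 then show ?case by (simp add: goodu_zero)
next
  case (Suc k) show ?case using goodu_Lop(1)[OF assms Suc.IH] by simp
qed

lemma Uk_mono: assumes "goodg g" shows "x \<ge> 0 \<Longrightarrow> Uk g k x \<le> Uk g (Suc k) x"
proof (induction k arbitrary: x)
  case 0
  have "0 \<le> T * exp (r2 * x)" using T_pos by simp
  also have "\<dots> \<le> Uk g 1 x" using goodu_Lop(2)[OF assms goodu_zero 0] by simp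
  finally show ?case by simp
next
  case (Suc k)
  have gk: "goodu (Uk g k)" "goodu (Uk g (Suc k))" by (rule Uk_good[OF assms])+
  have "Lop (\<lambda>x. g x + F (Uk g k x)) x \<le> Lop (\<lambda>x. g x + F (Uk g (Suc k) x)) x"
  proof (rule Lop_mono[OF hyp_step(1)[OF assms gk(1)] hyp_step(1)[OF assms gk(2)] _ Suc.prems])
    fix y :: real assume y: "0 \<le> y"
    have "F (Uk g k y) \<le> F (Uk g (Suc k) y)"
      using gk y Suc.IH[OF y] by (intro F_mono) (auto simp: goodu_def)
    then show "g y + F (Uk g k y) \<le> g y + F (Uk g (Suc k) y)" by simp
  qed
  then show ?case by simp
qed

lemma Uk_mono_g: assumes "goodg g" "goodg g'" "\<And>x. x \<ge> 0 \<Longrightarrow> g x \<le> g' x"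
  shows "x \<ge> 0 \<Longrightarrow> Uk g k x \<le> Uk g' k x"
proof (induction k arbitrary: x)
  case 0 then show ?case by simp
next
  case (Suc k)
  have gk: "goodu (Uk g k)" "goodu (Uk g' k)" using Uk_good assms by auto
  have "Lop (\<lambda>x. g x + F (Uk g k x)) x \<le> Lop (\<lambda>x. g' x + F (Uk g' k x)) x"
  proof (rule Lop_mono[OF hyp_step(1)[OF assms(1) gk(1)] hyp_step(1)[OF assms(2) gk(2)] _ Suc.prems])
    fix y :: real assume y: "0 \<le> y"
    have "F (Uk g k y) \<le> F (Uk g' k y)"
      using gk y Suc.IH[OF y] by (intro F_mono) (auto simp: goodu_def)
    then show "g y + F (Uk g k y) \<le> g' y + F (Uk g' k y)" using assms(3)[OF y] by simp
  qed
  then show ?case by simp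
qed

definition "Sol g x = (SUP k. Uk g k x)"

lemma Sol_lim: assumes "goodg g" "x \<ge> 0" shows "(\<lambda>k. Uk g k x) \<longlonglongrightarrow> Sol g x"
  unfolding Sol_def
proof (rule LIMSEQ_incseq_SUP)
  show "bdd_above (range (\<lambda>k. Uk g k x))"
    using Uk_good[OF assms(1)] assms(2) by (auto simp: goodu_def intro!: bdd_aboveI[of _ T])
  show "incseq (\<lambda>k. Uk g k x)"
    using Uk_mono[OF assms] by (simp add: incseq_SucI)
qed

lemma limit_good: assumes "\<And>k. goodu (us k)" "\<And>x. x \<ge> 0 \<Longrightarrow> (\<lambda>k. us k x) \<longlonglongrightarrow> u x"
  shows "goodu u"
proof -
  have b: "0 \<le> u x \<and> u x \<le> T" if "x \<ge> 0" for x
  proof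
    show "0 \<le> u x" using assms(1) that
      by (intro LIMSEQ_le_const[OF assms(2)[OF that]]) (auto simp: goodu_def)
    show "u x \<le> T" using assms(1) that
      by (intro LIMSEQ_le_const2[OF assms(2)[OF that]]) (auto simp: goodu_def)
  qed
  have l: "\<bar>u x - u y\<bar> \<le> Bd1 HH * \<bar>x - y\<bar>" if "x \<ge> 0" "y \<ge> 0" for x y
  proof (rule LIMSEQ_le_const2)
    show "(\<lambda>k. \<bar>us k x - us k y\<bar>) \<longlonglongrightarrow> \<bar>u x - u y\<bar>"
      using assms(2) that by (intro tendsto_intros)
    show "\<exists>N. \<forall>n\<ge>N. \<bar>us n x - us n y\<bar> \<le> Bd1 HH * \<bar>x - y\<bar>"
      using assms(1) that by (auto simp: goodu_def)
  qed
  show ?thesis unfolding goodu_def using b l lip_cont[OF l Bd1HH] by auto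
qed

lemma Sol_good: assumes "goodg g" shows "goodu (Sol g)"
  using limit_good[OF Uk_good[OF assms] Sol_lim[OF assms]] .

lemma F_tendsto: "(f \<longlongrightarrow> a) F' \<Longrightarrow> ((\<lambda>x. F (f x)) \<longlongrightarrow> F a) F'"
  unfolding F_def by (intro tendsto_intros)

lemma Sol_fix: assumes "goodg g" "x \<ge> 0"
  shows "Sol g x = Lop (\<lambda>x. g x + F (Sol g x)) x"
proof -
  have "(\<lambda>k. Lop (\<lambda>x. g x + F (Uk g k x)) x) \<longlonglongrightarrow> Lop (\<lambda>x. g x + F (Sol g x)) x"
  proof (rule Lop_lim[OF _ _ assms(2)])
    show "hyp (\<lambda>x. g x + F (Uk g k x)) HH" for k
      by (rule hyp_step(1)[OF assms(1) Uk_good[OF assms(1)]])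
    show "(\<lambda>k. g y + F (Uk g k y)) \<longlonglongrightarrow> g y + F (Sol g y)" if "y \<ge> 0" for y
      using Sol_lim[OF assms(1) that] by (intro tendsto_intros F_tendsto)
  qed
  then have "(\<lambda>k. Uk g (Suc k) x) \<longlonglongrightarrow> Lop (\<lambda>x. g x + F (Sol g x)) x" by simp
  moreover have "(\<lambda>k. Uk g (Suc k) x) \<longlonglongrightarrow> Sol g x"
    using Sol_lim[OF assms] by (rule LIMSEQ_Suc)
  ultimately show ?thesis using LIMSEQ_unique by blast
qed

lemma Sol_mono: assumes "goodg g" "goodg g'" "\<And>x. x \<ge> 0 \<Longrightarrow> g x \<le> g' x" "x \<ge> 0"
  shows "Sol g x \<le> Sol g' x"
  by (rule LIMSEQ_le[OF Sol_lim[OF assms(1,4)] Sol_lim[OF assms(2,4)]])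
     (use Uk_mono_g[OF assms(1-3) assms(4)] in auto)

definition "B1 = Bd1 HH"
definition "B2 = c * B1 + M * T + HH"
definition "Kh = c * (B2 + 2 * B1) + (4 * T^3 * B1 + 2 * T^4) + 3 * T^4"
definition "KK = T + B1 + B2 + Kh"

lemma consts_nonneg: "0 \<le> B1" "0 \<le> B2" "0 \<le> Kh" "0 \<le> KK"
proof -
  show b1: "0 \<le> B1" unfolding B1_def by (rule Bd1HH)
  show b2: "0 \<le> B2" unfolding B2_def using b1 c_pos M_pos T_pos HH_pos by simp
  show kh: "0 \<le> Kh" unfolding Kh_def using b1 b2 c_pos T_pos by simp
  show "0 \<le> KK" unfolding KK_def using b1 b2 kh T_pos by simp
qed

lemma C2h_gen:
  assumes g: "goodg g" and gh: "\<And>x y. x \<ge> 0 \<Longrightarrow> y \<ge> 0 \<Longrightarrow> \<bar>g x - g y\<bar> \<le> 3 * T^4 * sqrt \<bar>x - y\<bar>"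
    and u: "goodu u" and hdef: "h = (\<lambda>x. g x + F (u x))"
    and fx: "\<And>x. x \<ge> 0 \<Longrightarrow> u x = Lop h x"
  shows "C2h u (L1 h) (\<lambda>x. c * L1 h x + M * Lop h x - h x) KK"
    and "\<And>x. x \<ge> 0 \<Longrightarrow> (c * L1 h x + M * Lop h x - h x) - c * L1 h x - u x ^ 4 = - g x"
proof -
  have hyp: "hyp h HH" unfolding hdef by (rule hyp_step(1)[OF g u])
  have hc: "continuous_on {0..} h" by (rule hypD(1)[OF hyp])
  have ub: "0 \<le> u x" "u x \<le> T" if "x \<ge> 0" for x using u that by (auto simp: goodu_def)
  have ul: "\<bar>u x - u y\<bar> \<le> B1 * \<bar>x - y\<bar>" if "x \<ge> 0" "y \<ge> 0" for x y
    using u that by (auto simp: goodu_def B1_def)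
  have gb: "0 \<le> g x" "g x \<le> T^4" if "x \<ge> 0" for x using g that by (auto simp: goodg_def)
  define f2 where "f2 = (\<lambda>x. c * L1 h x + M * Lop h x - h x)"
  show eq: "(c * L1 h x + M * Lop h x - h x) - c * L1 h x - u x ^ 4 = - g x" if "x \<ge> 0" for x
    using fx[OF that] by (simp add: hdef F_def)
  have f2': "f2 x = c * L1 h x + u x ^ 4 - g x" if "x \<ge> 0" for x
    using eq[OF that] unfolding f2_def by simp
  have du: "(u has_real_derivative L1 h x) (at x within {0..})" if "x \<ge> 0" for x
    by (rule has_field_derivative_transform_within[OF Lop_deriv[OF hc that], of 1])
       (use that fx in auto)
  have d1: "(L1 h has_real_derivative f2 x) (at x within {0..})" if "x \<ge> 0" for x
    unfolding f2_def by (rule L1_deriv[OF hc that])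
  have L1b: "\<bar>L1 h x\<bar> \<le> B1" if "x \<ge> 0" for x
    unfolding B1_def by (rule L1_bound[OF hyp that])
  have Lopb: "\<bar>Lop h x\<bar> \<le> T" if "x \<ge> 0" for x
    using ub[OF that] fx[OF that] by simp
  have hb: "\<bar>h x\<bar> \<le> HH" if "x \<ge> 0" for x by (rule hypD(2)[OF hyp that])
  have f2b: "\<bar>f2 x\<bar> \<le> B2" if "x \<ge> 0" for x
  proof -
    have "\<bar>f2 x\<bar> \<le> \<bar>c * L1 h x\<bar> + \<bar>M * Lop h x\<bar> + \<bar>h x\<bar>"
      unfolding f2_def by linarith
    also have "\<bar>c * L1 h x\<bar> \<le> c * B1"
      using L1b[OF that] c_pos by (simp add: abs_mult mult_left_mono)
    also have "\<bar>M * Lop h x\<bar> \<le> M * T"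
      using Lopb[OF that] M_pos by (simp add: abs_mult mult_left_mono)
    finally show ?thesis using hb[OF that] unfolding B2_def by simp
  qed
  have L1lip: "\<bar>L1 h x - L1 h y\<bar> \<le> B2 * \<bar>x - y\<bar>" if "x \<ge> 0" "y \<ge> 0" for x y
    using field_differentiable_bound[of "{0..}" "L1 h" f2 B2 x y] d1 f2b that
    by (auto simp: convex_real_interval)
  have L1cont: "continuous_on {0..} (L1 h)"
  proof -
    have "continuous (at x within {0..}) (L1 h)" if "x \<in> {0..}" for x
      using d1[of x] that by (auto intro: DERIV_continuous)
    then show ?thesis by (simp add: continuous_on_eq_continuous_within)
  qed
  have f2cont: "continuous_on {0..} f2"
    unfolding f2_def by (intro continuous_intros L1cont Lop_cont[OF hyp] hc)
  have hol: "\<bar>f2 x - f2 y\<bar> \<le> Kh * sqrt \<bar>x - y\<bar>" if xy: "x \<ge> 0" "y \<ge> 0" for x y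
  proof -
    have a1: "\<bar>L1 h x - L1 h y\<bar> \<le> (B2 + 2 * B1) * sqrt \<bar>x - y\<bar>"
    proof (rule lip_to_holder)
      show "\<bar>L1 h x - L1 h y\<bar> \<le> B2 * \<bar>x - y\<bar>" by (rule L1lip[OF xy])
      show "\<bar>L1 h x - L1 h y\<bar> \<le> 2 * B1" using L1b[OF xy(1)] L1b[OF xy(2)] by linarith
    qed (use consts_nonneg in auto)
    have a2: "\<bar>u x ^ 4 - u y ^ 4\<bar> \<le> (4 * T^3 * B1 + 2 * T^4) * sqrt \<bar>x - y\<bar>"
    proof (rule lip_to_holder)
      have "\<bar>u x ^ 4 - u y ^ 4\<bar> \<le> 4 * T^3 * \<bar>u x - u y\<bar>"
        using ub xy by (intro pow4_diff) auto
      also have "\<dots> \<le> 4 * T^3 * (B1 * \<bar>x - y\<bar>)"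
        using ul[OF xy] T_pos by (intro mult_left_mono) auto
      finally show "\<bar>u x ^ 4 - u y ^ 4\<bar> \<le> 4 * T ^ 3 * B1 * \<bar>x - y\<bar>" by (simp add: mult.assoc)
      have "0 \<le> u x ^ 4" "u x ^ 4 \<le> T^4" "0 \<le> u y ^ 4" "u y ^ 4 \<le> T^4"
        using ub xy by (auto intro: power_mono)
      then show "\<bar>u x ^ 4 - u y ^ 4\<bar> \<le> 2 * T^4" by linarith
    qed (use consts_nonneg T_pos in auto)
    have a3: "\<bar>g x - g y\<bar> \<le> 3 * T^4 * sqrt \<bar>x - y\<bar>" by (rule gh[OF xy])
    have "\<bar>f2 x - f2 y\<bar> = \<bar>c * (L1 h x - L1 h y) + (u x ^ 4 - u y ^ 4) - (g x - g y)\<bar>"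
      unfolding f2'[OF xy(1)] f2'[OF xy(2)] by (simp add: algebra_simps)
    also have "\<dots> \<le> c * \<bar>L1 h x - L1 h y\<bar> + \<bar>u x ^ 4 - u y ^ 4\<bar> + \<bar>g x - g y\<bar>"
    proof -
      have "\<bar>c * (L1 h x - L1 h y)\<bar> = c * \<bar>L1 h x - L1 h y\<bar>" using c_pos by (simp add: abs_mult)
      then show ?thesis by linarith
    qed
    also have "\<dots> \<le> c * ((B2 + 2 * B1) * sqrt \<bar>x - y\<bar>) + (4 * T^3 * B1 + 2 * T^4) * sqrt \<bar>x - y\<bar>
        + 3 * T^4 * sqrt \<bar>x - y\<bar>"
      using a1 a2 a3 c_pos by (intro add_mono mult_left_mono) auto
    also have "\<dots> = Kh * sqrt \<bar>x - y\<bar>" unfolding Kh_def by (simp add: algebra_simps)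
    finally show ?thesis .
  qed
  show "C2h u (L1 h) (\<lambda>x. c * L1 h x + M * Lop h x - h x) KK"
    unfolding C2h_def f2_def[symmetric]
  proof (intro conjI allI impI ballI)
    show "(u has_real_derivative L1 h x) (at x within {0..})" if "x \<ge> 0" for x by (rule du[OF that])
    show "(L1 h has_real_derivative f2 x) (at x within {0..})" if "x \<ge> 0" for x by (rule d1[OF that])
    show "continuous_on {0..} f2" by (rule f2cont)
    show "\<bar>u x\<bar> \<le> KK" if "x \<ge> 0" for x
      using ub[OF that] consts_nonneg unfolding KK_def by simp
    show "\<bar>L1 h x\<bar> \<le> KK" if "x \<ge> 0" for x
      using L1b[OF that] consts_nonneg T_pos unfolding KK_def by simp
    show "\<bar>f2 x\<bar> \<le> KK" if "x \<ge> 0" for x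
      using f2b[OF that] consts_nonneg T_pos unfolding KK_def by simp
    show "\<bar>f2 x - f2 y\<bar> \<le> KK * sqrt \<bar>x - y\<bar>" if "x \<ge> 0" "y \<ge> 0" for x y
    proof -
      have "Kh * sqrt \<bar>x - y\<bar> \<le> KK * sqrt \<bar>x - y\<bar>"
        using consts_nonneg T_pos unfolding KK_def by (intro mult_right_mono) auto
      then show ?thesis using hol[OF that] by simp
    qed
  qed
qed

lemma phi4: assumes "goodu \<phi>"
  shows "continuous_on {0..} (\<lambda>\<eta>. \<phi> \<eta> ^ 4)" "\<And>x. x \<ge> 0 \<Longrightarrow> 0 \<le> \<phi> x ^ 4 \<and> \<phi> x ^ 4 \<le> T^4"
    "\<And>x. x \<ge> 0 \<Longrightarrow> \<bar>\<phi> x ^ 4\<bar> \<le> T^4"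
proof -
  show "continuous_on {0..} (\<lambda>\<eta>. \<phi> \<eta> ^ 4)" using assms by (intro continuous_intros) (auto simp: goodu_def)
  show b: "0 \<le> \<phi> x ^ 4 \<and> \<phi> x ^ 4 \<le> T^4" if "x \<ge> 0" for x
    using assms that by (auto simp: goodu_def intro: power_mono)
  show "\<bar>\<phi> x ^ 4\<bar> \<le> T^4" if "x \<ge> 0" for x using b[OF that] by simp
qed

lemma goodg_G: assumes "goodu \<phi>" shows "goodg (G (\<lambda>\<eta>. \<phi> \<eta> ^ 4))"
  unfolding goodg_def using G_cont[OF phi4(1,2)[OF assms]] G_bounds[OF phi4(1,2)[OF assms]] by auto

lemma holder_G: assumes "goodu \<phi>" "x \<ge> 0" "y \<ge> 0"
  shows "\<bar>G (\<lambda>\<eta>. \<phi> \<eta> ^ 4) x - G (\<lambda>\<eta>. \<phi> \<eta> ^ 4) y\<bar> \<le> 3 * T^4 * sqrt \<bar>x - y\<bar>"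
  by (rule G_holder[OF phi4(1,2)[OF assms(1)] assms(2,3)])

primrec fsq :: "nat \<Rightarrow> real \<Rightarrow> real" where
  "fsq 0 = (\<lambda>_. 0)"
| "fsq (Suc n) = Sol (G (\<lambda>\<eta>. fsq n \<eta> ^ 4))"

lemma fsq_good: "goodu (fsq n)"
proof (induction n)
  case 0 then show ?case by (simp add: goodu_zero)
next
  case (Suc n) show ?case using Sol_good[OF goodg_G[OF Suc.IH]] by simp
qed

lemma fsq_mono: "x \<ge> 0 \<Longrightarrow> fsq n x \<le> fsq (Suc n) x"
proof (induction n arbitrary: x)
  case 0
  have "0 \<le> fsq (Suc 0) x" using fsq_good[of 1] 0 unfolding goodu_def by (simp del: fsq.simps)
  then show ?case by simp
next
  case (Suc n)
  have gn: "goodu (fsq n)" "goodu (fsq (Suc n))" by (rule fsq_good)+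
  have "Sol (G (\<lambda>\<eta>. fsq n \<eta> ^ 4)) x \<le> Sol (G (\<lambda>\<eta>. fsq (Suc n) \<eta> ^ 4)) x"
  proof (rule Sol_mono[OF goodg_G[OF gn(1)] goodg_G[OF gn(2)] _ Suc.prems])
    fix y :: real assume y: "0 \<le> y"
    show "G (\<lambda>\<eta>. fsq n \<eta> ^ 4) y \<le> G (\<lambda>\<eta>. fsq (Suc n) \<eta> ^ 4) y"
    proof (rule G_mono[OF phi4(1)[OF gn(1)] phi4(3)[OF gn(1)] phi4(1)[OF gn(2)] phi4(3)[OF gn(2)]])
      fix z :: real assume z: "0 \<le> z"
      show "fsq n z ^ 4 \<le> fsq (Suc n) z ^ 4"
        using Suc.IH[OF z] gn(1) z by (intro power_mono) (auto simp: goodu_def)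
    qed
  qed
  then show ?case by simp
qed

definition "fl x = (SUP n. fsq n x)"

lemma fl_lim: assumes "x \<ge> 0" shows "(\<lambda>n. fsq n x) \<longlonglongrightarrow> fl x"
  unfolding fl_def
proof (rule LIMSEQ_incseq_SUP)
  show "bdd_above (range (\<lambda>n. fsq n x))"
    using fsq_good assms by (auto simp: goodu_def intro!: bdd_aboveI[of _ T])
  show "incseq (\<lambda>n. fsq n x)"
    using fsq_mono[OF assms] by (simp add: incseq_SucI)
qed

lemma fl_good: "goodu fl"
  by (rule limit_good[OF fsq_good fl_lim])

lemma fsq_fix: assumes "x \<ge> 0"
  shows "fsq (Suc n) x = Lop (\<lambda>x. G (\<lambda>\<eta>. fsq n \<eta> ^ 4) x + F (fsq (Suc n) x)) x"
  using Sol_fix[OF goodg_G[OF fsq_good[of n]] assms] by simp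

lemma fl_fix: assumes "x \<ge> 0"
  shows "fl x = Lop (\<lambda>x. G (\<lambda>\<eta>. fl \<eta> ^ 4) x + F (fl x)) x"
proof -
  have "(\<lambda>n. Lop (\<lambda>x. G (\<lambda>\<eta>. fsq n \<eta> ^ 4) x + F (fsq (Suc n) x)) x)
      \<longlonglongrightarrow> Lop (\<lambda>x. G (\<lambda>\<eta>. fl \<eta> ^ 4) x + F (fl x)) x"
  proof (rule Lop_lim[OF _ _ assms])
    show "hyp (\<lambda>x. G (\<lambda>\<eta>. fsq n \<eta> ^ 4) x + F (fsq (Suc n) x)) HH" for n
      by (rule hyp_step(1)[OF goodg_G[OF fsq_good] fsq_good])
    show "(\<lambda>n. G (\<lambda>\<eta>. fsq n \<eta> ^ 4) y + F (fsq (Suc n) y)) \<longlonglongrightarrow> G (\<lambda>\<eta>. fl \<eta> ^ 4) y + F (fl y)"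
      if y: "y \<ge> 0" for y
    proof (intro tendsto_add F_tendsto)
      show "(\<lambda>n. G (\<lambda>\<eta>. fsq n \<eta> ^ 4) y) \<longlonglongrightarrow> G (\<lambda>\<eta>. fl \<eta> ^ 4) y"
        by (rule G_lim[OF phi4(1)[OF fsq_good] phi4(3)[OF fsq_good]])
           (use fl_lim in \<open>auto intro!: tendsto_intros\<close>)
      show "(\<lambda>n. fsq (Suc n) y) \<longlonglongrightarrow> fl y" using fl_lim[OF y] by (rule LIMSEQ_Suc)
    qed
  qed
  moreover have "(\<lambda>n. fsq (Suc n) x) \<longlonglongrightarrow> fl x" using fl_lim[OF assms] by (rule LIMSEQ_Suc)
  ultimately show ?thesis using fsq_fix[OF assms] LIMSEQ_unique by auto
qed

end

lemma C2h_zero: "0 \<le> K \<Longrightarrow> C2h (\<lambda>_. 0) (\<lambda>_. 0) (\<lambda>_. 0) K"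
  unfolding C2h_def by auto

theorem theorem2p3:
  fixes T_M c :: real
  assumes "T_M > 0" and "c > 0"
  shows "\<exists>f f1 f2 K fs fs1 fs2 Ks.
     \<comment> \<open>the solution f\<close>
     C2h f f1 f2 K \<and>
     (\<forall>y>0. f y > 0) \<and> (\<forall>y\<ge>0. f y \<ge> 0) \<and> f 0 = T_M \<and>
     (\<forall>y>0. ((\<lambda>\<eta>. E (y - \<eta>) * f \<eta> ^ 4) has_integral
                 (- (f2 y - c * f1 y - f y ^ 4))) {0..}) \<and>
     \<comment> \<open>the approximating sequence\<close>
     (\<forall>n. C2h (fs n) (fs1 n) (fs2 n) Ks) \<and>
     (\<forall>y\<ge>0. fs 0 y = 0) \<and>
     (\<forall>n y. y \<ge> 0 \<longrightarrow> 0 \<le> fs n y \<and> fs n y \<le> fs (Suc n) y \<and> fs (Suc n) y \<le> T_M) \<and>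
     (\<forall>n y. n \<ge> 1 \<longrightarrow> y > 0 \<longrightarrow> fs n y > 0) \<and>
     (\<forall>n. fs (Suc n) 0 = T_M) \<and>
     (\<forall>n. \<forall>y>0. ((\<lambda>\<eta>. E (y - \<eta>) * fs n \<eta> ^ 4) has_integral
                 (- (fs2 (Suc n) y - c * fs1 (Suc n) y - fs (Suc n) y ^ 4))) {0..}) \<and>
     (\<forall>y\<ge>0. (\<lambda>n. fs n y) \<longlonglongrightarrow> f y)"
proof -
  define MM where "MM = 4 * T_M^3 + 1"
  have T3: "0 \<le> T_M ^ 3" using assms by simp
  have MMpos: "0 < MM" unfolding MM_def using T3 by linarith
  have MMbig: "4 * T_M ^ 3 \<le> MM" unfolding MM_def by simp
  interpret main c MM T_M
    by unfold_locales (use assms MMpos MMbig in auto)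
  define gq where "gq n = G (\<lambda>\<eta>. fsq n \<eta> ^ 4)" for n
  define hq where "hq n = (\<lambda>x. gq n x + F (fsq (Suc n) x))" for n
  define gl where "gl = G (\<lambda>\<eta>. fl \<eta> ^ 4)"
  define hl where "hl = (\<lambda>x. gl x + F (fl x))"
  define fs1 where "fs1 n = (case n of 0 \<Rightarrow> (\<lambda>_. 0) | Suc m \<Rightarrow> L1 (hq m))" for n
  define fs2 where "fs2 n = (case n of 0 \<Rightarrow> (\<lambda>_. 0)
     | Suc m \<Rightarrow> (\<lambda>x. c * L1 (hq m) x + MM * Lop (hq m) x - hq m x))" for n
  define f2 where "f2 = (\<lambda>x. c * L1 hl x + MM * Lop hl x - hl x)"
  have ggq: "goodg (gq n)" for n unfolding gq_def by (rule goodg_G[OF fsq_good])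
  have ggl: "goodg gl" unfolding gl_def by (rule goodg_G[OF fl_good])
  have fxq: "fsq (Suc n) x = Lop (hq n) x" if "x \<ge> 0" for n x
    unfolding hq_def gq_def by (rule fsq_fix[OF that])
  have fxl: "fl x = Lop hl x" if "x \<ge> 0" for x
    unfolding hl_def gl_def by (rule fl_fix[OF that])
  have hypq: "hyp (hq n) HH" for n unfolding hq_def by (rule hyp_step(1)[OF ggq fsq_good])
  have hypl: "hyp hl HH" unfolding hl_def by (rule hyp_step(1)[OF ggl fl_good])
  have hq0: "0 \<le> hq n x" if "x \<ge> 0" for n x unfolding hq_def by (rule hyp_step(2)[OF ggq fsq_good that])
  have hl0: "0 \<le> hl x" if "x \<ge> 0" for x unfolding hl_def by (rule hyp_step(2)[OF ggl fl_good that])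
  have hgq: "\<bar>gq n x - gq n y\<bar> \<le> 3 * T_M^4 * sqrt \<bar>x - y\<bar>" if "x \<ge> 0" "y \<ge> 0" for n x y
    unfolding gq_def by (rule holder_G[OF fsq_good that])
  have hgl: "\<bar>gl x - gl y\<bar> \<le> 3 * T_M^4 * sqrt \<bar>x - y\<bar>" if "x \<ge> 0" "y \<ge> 0" for x y
    unfolding gl_def by (rule holder_G[OF fl_good that])
  have hqd: "hq n = (\<lambda>x. gq n x + F (fsq (Suc n) x))" for n by (simp add: hq_def)
  note Cq = C2h_gen[OF ggq hgq fsq_good hqd fxq]
  note Cl = C2h_gen[OF ggl hgl fl_good hl_def fxl]
  show ?thesis
  proof (intro exI conjI allI impI)
    show "C2h fl (L1 hl) f2 KK" unfolding f2_def by (rule Cl(1))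
    show "fl y > 0" if "y > 0" for y
    proof -
      have "0 < T_M * exp (r2 * y)" using assms by simp
      also have "\<dots> \<le> Lop hl y" using Lop_lower[OF hypl hl0] that by simp
      finally show ?thesis using fxl[of y] that by simp
    qed
    show "fl y \<ge> 0" if "y \<ge> 0" for y using fl_good that by (simp add: goodu_def)
    show "fl 0 = T_M" using fxl[of 0] Lop_0 by simp
    show "((\<lambda>\<eta>. E (y - \<eta>) * fl \<eta> ^ 4) has_integral (- (f2 y - c * L1 hl y - fl y ^ 4))) {0..}"
      if "y > 0" for y
    proof -
      have "- (f2 y - c * L1 hl y - fl y ^ 4) = gl y"
        using Cl(2)[of y] that unfolding f2_def by simp
      then show ?thesis unfolding gl_def
        using G_hasint[OF phi4(1)[OF fl_good] phi4(3)[OF fl_good], of y] by simp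
    qed
    show "C2h (fsq n) (fs1 n) (fs2 n) KK" for n
    proof (cases n)
      case 0 then show ?thesis using consts_nonneg by (simp add: fs1_def fs2_def C2h_zero)
    next
      case (Suc m) then show ?thesis using Cq(1)[of m] by (simp add: fs1_def fs2_def)
    qed
    show "fsq 0 y = 0" for y by simp
    show "0 \<le> fsq n y" if "y \<ge> 0" for n y using fsq_good[of n] that by (simp add: goodu_def)
    show "fsq n y \<le> fsq (Suc n) y" if "y \<ge> 0" for n y by (rule fsq_mono[OF that])
    show "fsq (Suc n) y \<le> T_M" if "y \<ge> 0" for n y using fsq_good[of "Suc n"] that by (simp add: goodu_def)
    show "fsq n y > 0" if n1: "n \<ge> 1" "y > 0" for n y
    proof -
      obtain m where m: "n = Suc m" using n1(1) by (cases n) auto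
      have "0 < T_M * exp (r2 * y)" using assms by simp
      also have "\<dots> \<le> Lop (hq m) y" using Lop_lower[OF hypq hq0] n1 by simp
      finally show ?thesis using fxq[of y m] n1 m by simp
    qed
    show "fsq (Suc n) 0 = T_M" for n using fxq[of 0 n] Lop_0 by simp
    show "((\<lambda>\<eta>. E (y - \<eta>) * fsq n \<eta> ^ 4) has_integral
        (- (fs2 (Suc n) y - c * fs1 (Suc n) y - fsq (Suc n) y ^ 4))) {0..}" if "y > 0" for n y
    proof -
      have "- (fs2 (Suc n) y - c * fs1 (Suc n) y - fsq (Suc n) y ^ 4) = gq n y"
        using Cq(2)[of y n] that by (simp add: fs1_def fs2_def)
      then show ?thesis unfolding gq_def
        using G_hasint[OF phi4(1)[OF fsq_good[of n]] phi4(3)[OF fsq_good[of n]], of y] by simp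
    qed
    show "(\<lambda>n. fsq n y) \<longlonglongrightarrow> fl y" if "y \<ge> 0" for y by (rule fl_lim[OF that])
  qed
qed

end
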